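(* Consider the \texttt{Ghost} algorithm described in the context and assume (A1)–(A4) with $\mu=0$. If $\gamma L(1+\omega_{\mathrm{up}}/N)\le\frac12$, then for all $k\ge1$, $$\mathbb{E}\|w_k-w_*\|^2\le\mathbb{E}\|w_{k-1}-w_*\|^2-\gamma\,\mathbb{E}[F(w_{k-1})-F_*]-\frac{\gamma}{2L}\mathbb{E}\|\nabla F(\widehat w_{k-1})\|^2+2\gamma^3\omega_{\mathrm{dwn}}L\Big(1+\frac{\omega_{\mathrm{up}}}{N}\Big)\mathbb{E}\|\nabla F(\widehat w_{k-2})\|^2+\gamma^2\frac{(1+\omega_{\mathrm{up}})\sigma^2}{Nb}\big(1+2\gamma L\omega_{\mathrm{dwn}}\big),$$ with the convention $\nabla F(\widehat w_{-1})=0$.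
   Context: $N\ge1$ homogeneous workers, objective $F:\mathbb{R}^d\to\mathbb{R}$ with minimizer $w_*$, $F_*=F(w_* )$. Worker $i$ at iteration $k$ has an oracle $g_k^i$ (mini-batch $b$) with $\mathbb{E}[g_k^i(w)]=\nabla F(w)$; $\widehat g_k^i(w)=\mathcal{C}_{\mathrm{up}}(g_k^i(w))$. All compressions and oracle calls use fresh independent randomness. \texttt{Ghost} algorithm with step $\gamma$: $\widehat w_0=w_0$; for $k\ge0$: $w_{k+1}=w_k-\gamma\frac1N\sum_i\widehat g^i_{k+1}(\widehat w_k)$, $\widehat w_{k+1}=w_k-\gamma\,\mathcal{C}_{\mathrm{dwn}}\big(\frac1N\sum_i\widehat g^i_{k+1}(\widehat w_k)\big)$ (same vector inside). (A1) for some $\omega_{\mathrm{up}},\omega_{\mathrm{dwn}}>0$, all $w$: $\mathbb{E}[\mathcal{C}_{\mathrm{up/dwn}}(w)]=w$, $\mathbb{E}\|\mathcal{C}_{\mathrm{up/dwn}}(w)-w\|^2\le\omega_{\mathrm{up/dwn}}\|w\|^2$. (A2) $F$ twice continuously differentiable, $L$-smooth. (A3) $F$ $\mu$-strongly convex ($\mu=0$: convex). (A4) $\mathbb{E}\|g_k^i(w)-\nabla F(w)\|^2\le\sigma^2/b$. *)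

theory Defs
  imports "HOL-Probability.Probability"
begin

text \<open>Orc k i : randomness of the stochastic oracle of worker i at iteration k (incl. mini-batch);
  Up k i  : randomness of the uplink compression of worker i at iteration k;
  Dw k    : randomness of the downlink compression at iteration k.\<close>
datatype noise_idx = Orc nat nat | Up nat nat | Dw nat

definition used_idx :: "nat \<Rightarrow> noise_idx set" where
  "used_idx N = {Orc k i | k i. 1 \<le> k \<and> i < N} \<union> {Up k i | k i. 1 \<le> k \<and> i < N}
                 \<union> {Dw k | k. 1 \<le> k}"

text \<open>The Ghost iteration.  G k i w x : oracle g_k^i evaluated at w with randomness x;
  Cup v z / Cdwn v z : compression of v with randomness z.  Returns (w_k, what_k).\<close>
primrec ghost ::
  "nat \<Rightarrow> real \<Rightarrow> (nat \<Rightarrow> nat \<Rightarrow> 'a::euclidean_space \<Rightarrow> 'b \<Rightarrow> 'a) \<Rightarrow> ('a \<Rightarrow> 'b \<Rightarrow> 'a) \<Rightarrow>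
   ('a \<Rightarrow> 'b \<Rightarrow> 'a) \<Rightarrow> (noise_idx \<Rightarrow> 'm \<Rightarrow> 'b) \<Rightarrow> 'a \<Rightarrow> nat \<Rightarrow> 'm \<Rightarrow> 'a \<times> 'a" where
  "ghost N \<gamma> G Cup Cdwn \<xi> w0 0 \<omega> = (w0, w0)"
| "ghost N \<gamma> G Cup Cdwn \<xi> w0 (Suc k) \<omega> =
     (let p = ghost N \<gamma> G Cup Cdwn \<xi> w0 k \<omega>;
          v = (1 / real N) *\<^sub>R (\<Sum>i<N. Cup (G (Suc k) i (snd p) (\<xi> (Orc (Suc k) i) \<omega>))
                                            (\<xi> (Up (Suc k) i) \<omega>))
      in (fst p - \<gamma> *\<^sub>R v, fst p - \<gamma> *\<^sub>R Cdwn v (\<xi> (Dw (Suc k)) \<omega>)))"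

end

theory Submission
  imports Defs
begin


locale isetting = prob_space M for M :: "'m measure" +
  fixes S :: "'b measure" and \<xi> :: "noise_idx \<Rightarrow> 'm \<Rightarrow> 'b" and U :: "noise_idx set"
  assumes indep: "indep_vars (\<lambda>_. S) \<xi> U"
begin

definition rJ :: "noise_idx set \<Rightarrow> 'm \<Rightarrow> (noise_idx \<Rightarrow> 'b)" where
  "rJ J \<omega> = restrict (\<lambda>i. \<xi> i \<omega>) J"

lemma rJ_app[simp]: "i \<in> J \<Longrightarrow> rJ J \<omega> i = \<xi> i \<omega>"
  by (simp add: rJ_def)

lemma xi_meas: "i \<in> U \<Longrightarrow> \<xi> i \<in> measurable M S"
  using indep unfolding indep_vars_def by auto

lemma rJ_meas[measurable]: "J \<subseteq> U \<Longrightarrow> rJ J \<in> measurable M (PiM J (\<lambda>_. S))"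
  unfolding rJ_def using xi_meas by (auto intro!: measurable_restrict)

lemma rJ_space: "rJ J \<omega> \<in> space (PiM J (\<lambda>_. S))" if "J \<subseteq> U" "\<omega> \<in> space M"
  using measurable_space[OF rJ_meas[OF that(1)] that(2)] .

lemma indep_rJ:
  assumes "J \<inter> J' = {}" "J \<subseteq> U" "J' \<subseteq> U"
  shows "distr M (PiM J (\<lambda>_. S)) (rJ J) \<Otimes>\<^sub>M distr M (PiM J' (\<lambda>_. S)) (rJ J') =
         distr M (PiM J (\<lambda>_. S) \<Otimes>\<^sub>M PiM J' (\<lambda>_. S)) (\<lambda>\<omega>. (rJ J \<omega>, rJ J' \<omega>))"
proof -
  have "indep_var (PiM J (\<lambda>_. S)) (rJ J) (PiM J' (\<lambda>_. S)) (rJ J')"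
    using indep_var_restrict[OF indep assms] unfolding rJ_def[abs_def] .
  then show ?thesis unfolding indep_var_distribution_eq by blast
qed

lemma cond:
  fixes f :: "_ \<Rightarrow> 'c::{banach, second_countable_topology}"
  assumes J: "J \<inter> J' = {}" "J \<subseteq> U" "J' \<subseteq> U"
  and f: "f \<in> borel_measurable (PiM J (\<lambda>_. S) \<Otimes>\<^sub>M PiM J' (\<lambda>_. S))"
  and int2: "\<And>p. p \<in> space (PiM J (\<lambda>_. S)) \<Longrightarrow> integrable M (\<lambda>\<omega>. f (p, rJ J' \<omega>))"
  and bnd: "\<And>p. p \<in> space (PiM J (\<lambda>_. S)) \<Longrightarrow> (\<integral>\<omega>. norm (f (p, rJ J' \<omega>)) \<partial>M) \<le> B p"
  and B: "integrable M (\<lambda>\<omega>. B (rJ J \<omega>))"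
  shows "integrable M (\<lambda>\<omega>. f (rJ J \<omega>, rJ J' \<omega>))"
    and "integrable M (\<lambda>\<omega>. (\<integral>\<omega>'. f (rJ J \<omega>, rJ J' \<omega>') \<partial>M))"
    and "(\<integral>\<omega>. f (rJ J \<omega>, rJ J' \<omega>) \<partial>M) = (\<integral>\<omega>. (\<integral>\<omega>'. f (rJ J \<omega>, rJ J' \<omega>') \<partial>M) \<partial>M)"
proof -
  define M1 where "M1 = distr M (PiM J (\<lambda>_. S)) (rJ J)"
  define M2 where "M2 = distr M (PiM J' (\<lambda>_. S)) (rJ J')"
  have m1[measurable]: "rJ J \<in> measurable M (PiM J (\<lambda>_. S))" using J by simp
  have m2[measurable]: "rJ J' \<in> measurable M (PiM J' (\<lambda>_. S))" using J by simp
  interpret P: pair_prob_space M1 M2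
    unfolding M1_def M2_def
    by (intro pair_prob_space.intro pair_sigma_finite.intro prob_space_imp_sigma_finite prob_space_distr m1 m2)
  have eqP: "M1 \<Otimes>\<^sub>M M2 = distr M (PiM J (\<lambda>_. S) \<Otimes>\<^sub>M PiM J' (\<lambda>_. S)) (\<lambda>\<omega>. (rJ J \<omega>, rJ J' \<omega>))"
    unfolding M1_def M2_def by (rule indep_rJ[OF J])
  have sets12: "sets (M1 \<Otimes>\<^sub>M M2) = sets (PiM J (\<lambda>_. S) \<Otimes>\<^sub>M PiM J' (\<lambda>_. S))"
    unfolding M1_def M2_def by (intro sets_pair_measure_cong sets_distr)
  have fm: "f \<in> borel_measurable (M1 \<Otimes>\<^sub>M M2)"
    using f measurable_cong_sets[OF sets12 refl] by blast
  have sp1: "space M1 = space (PiM J (\<lambda>_. S))" unfolding M1_def by simp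
  have int2': "integrable M2 (\<lambda>y. f (x, y))" if x: "x \<in> space M1" for x
  proof -
    have "(\<lambda>y. f (x, y)) \<in> borel_measurable (PiM J' (\<lambda>_. S))"
      using measurable_Pair2[OF f] x sp1 by simp
    then show ?thesis unfolding M2_def using int2[of x] x sp1
      by (subst integrable_distr_eq) auto
  qed
  have i2eq: "(\<integral>y. g y \<partial>M2) = (\<integral>\<omega>. g (rJ J' \<omega>) \<partial>M)" if "g \<in> borel_measurable (PiM J' (\<lambda>_. S))"
    for g :: "_ \<Rightarrow> 'd::{banach, second_countable_topology}"
    unfolding M2_def using that by (rule integral_distr[OF m2])
  have nm: "(\<lambda>x. \<integral>y. norm (f (x, y)) \<partial>M2) \<in> borel_measurable (PiM J (\<lambda>_. S))"
  proof -
    have "(\<lambda>x. \<integral>y. norm (f (x, y)) \<partial>M2) \<in> borel_measurable M1"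
      using fm by (intro P.M2.borel_measurable_lebesgue_integral) simp
    then show ?thesis unfolding M1_def by simp
  qed
  have integ1: "integrable M1 (\<lambda>x. \<integral>y. norm (f (x, y)) \<partial>M2)"
    unfolding M1_def
  proof (subst integrable_distr_eq[OF m1 nm])
    show "integrable M (\<lambda>x. \<integral>y. norm (f (rJ J x, y)) \<partial>M2)"
    proof (rule Bochner_Integration.integrable_bound[OF B])
      show "(\<lambda>x. \<integral>y. norm (f (rJ J x, y)) \<partial>M2) \<in> borel_measurable M"
        using nm m1 by measurable
      show "AE x in M. norm (\<integral>y. norm (f (rJ J x, y)) \<partial>M2) \<le> norm (B (rJ J x))"
      proof (rule AE_I2)
        fix x assume x: "x \<in> space M"
        have sp: "rJ J x \<in> space (PiM J (\<lambda>_. S))" using rJ_space J x by blast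
        have "(\<integral>y. norm (f (rJ J x, y)) \<partial>M2) = (\<integral>\<omega>. norm (f (rJ J x, rJ J' \<omega>)) \<partial>M)"
          using measurable_Pair2[OF f sp] by (intro i2eq) measurable
        moreover have "0 \<le> (\<integral>y. norm (f (rJ J x, y)) \<partial>M2)" by simp
        ultimately show "norm (\<integral>y. norm (f (rJ J x, y)) \<partial>M2) \<le> norm (B (rJ J x))"
          using bnd[OF sp] by simp
      qed
    qed
  qed
  have intP: "integrable (M1 \<Otimes>\<^sub>M M2) f"
    by (rule P.Fubini_integrable[OF fm integ1]) (auto intro!: AE_I2 int2')
  have pm: "(\<lambda>\<omega>. (rJ J \<omega>, rJ J' \<omega>)) \<in> measurable M (PiM J (\<lambda>_. S) \<Otimes>\<^sub>M PiM J' (\<lambda>_. S))"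
    by measurable
  show intM: "integrable M (\<lambda>\<omega>. f (rJ J \<omega>, rJ J' \<omega>))"
    using intP unfolding eqP by (subst (asm) integrable_distr_eq[OF pm f]) simp
  have inm: "(\<lambda>x. \<integral>y. f (x, y) \<partial>M2) \<in> borel_measurable (PiM J (\<lambda>_. S))"
  proof -
    have "(\<lambda>x. \<integral>y. f (x, y) \<partial>M2) \<in> borel_measurable M1"
      using fm by (intro P.M2.borel_measurable_lebesgue_integral) simp
    then show ?thesis unfolding M1_def by simp
  qed
  have innereq: "(\<integral>y. f (rJ J x, y) \<partial>M2) = (\<integral>\<omega>'. f (rJ J x, rJ J' \<omega>') \<partial>M)" if x: "x \<in> space M" for x
  proof -
    have sp: "rJ J x \<in> space (PiM J (\<lambda>_. S))" using rJ_space J x by blast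
    show ?thesis using measurable_Pair2[OF f sp] by (intro i2eq)
  qed
  have "integrable M1 (\<lambda>x. \<integral>y. f (x, y) \<partial>M2)" by (rule P.integrable_fst'[OF intP])
  then have "integrable M (\<lambda>\<omega>. \<integral>y. f (rJ J \<omega>, y) \<partial>M2)"
    unfolding M1_def by (subst (asm) integrable_distr_eq[OF m1 inm])
  then show "integrable M (\<lambda>\<omega>. (\<integral>\<omega>'. f (rJ J \<omega>, rJ J' \<omega>') \<partial>M))"
  proof -
    have "integrable M (\<lambda>\<omega>. \<integral>y. f (rJ J \<omega>, y) \<partial>M2) = integrable M (\<lambda>\<omega>. (\<integral>\<omega>'. f (rJ J \<omega>, rJ J' \<omega>') \<partial>M))"
      by (rule Bochner_Integration.integrable_cong[OF refl]) (rule innereq)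
    with \<open>integrable M (\<lambda>\<omega>. \<integral>y. f (rJ J \<omega>, y) \<partial>M2)\<close> show ?thesis by simp
  qed
  have "(\<integral>\<omega>. f (rJ J \<omega>, rJ J' \<omega>) \<partial>M) = integral\<^sup>L (M1 \<Otimes>\<^sub>M M2) f"
    unfolding eqP by (subst integral_distr[OF pm f]) simp
  also have "\<dots> = (\<integral>x. (\<integral>y. f (x, y) \<partial>M2) \<partial>M1)"
    by (rule P.integral_fst'[OF intP, symmetric])
  also have "\<dots> = (\<integral>\<omega>. (\<integral>y. f (rJ J \<omega>, y) \<partial>M2) \<partial>M)"
  proof -
    have "(\<lambda>x. \<integral>y. f (x, y) \<partial>M2) \<in> borel_measurable M1"
      using fm by (intro P.M2.borel_measurable_lebesgue_integral) simp
    then have "(\<lambda>x. \<integral>y. f (x, y) \<partial>M2) \<in> borel_measurable (PiM J (\<lambda>_. S))"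
      unfolding M1_def by simp
    then show ?thesis unfolding M1_def by (rule integral_distr[OF m1])
  qed
  also have "\<dots> = (\<integral>\<omega>. (\<integral>\<omega>'. f (rJ J \<omega>, rJ J' \<omega>') \<partial>M) \<partial>M)"
  proof (rule Bochner_Integration.integral_cong[OF refl])
    fix x assume x: "x \<in> space M"
    have sp: "rJ J x \<in> space (PiM J (\<lambda>_. S))" using rJ_space J x by blast
    show "(\<integral>y. f (rJ J x, y) \<partial>M2) = (\<integral>\<omega>'. f (rJ J x, rJ J' \<omega>') \<partial>M)"
      using sp by (intro i2eq measurable_Pair2[OF f]) 
  qed
  finally show "(\<integral>\<omega>. f (rJ J \<omega>, rJ J' \<omega>) \<partial>M) = (\<integral>\<omega>. (\<integral>\<omega>'. f (rJ J \<omega>, rJ J' \<omega>') \<partial>M) \<partial>M)" .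
qed

lemma cond_le:
  fixes f :: "_ \<Rightarrow> real"
  assumes J: "J \<inter> J' = {}" "J \<subseteq> U" "J' \<subseteq> U"
  and f: "f \<in> borel_measurable (PiM J (\<lambda>_. S) \<Otimes>\<^sub>M PiM J' (\<lambda>_. S))"
  and int2: "\<And>p. p \<in> space (PiM J (\<lambda>_. S)) \<Longrightarrow> integrable M (\<lambda>\<omega>. f (p, rJ J' \<omega>))"
  and bnd: "\<And>p. p \<in> space (PiM J (\<lambda>_. S)) \<Longrightarrow> (\<integral>\<omega>. norm (f (p, rJ J' \<omega>)) \<partial>M) \<le> B p"
  and B: "integrable M (\<lambda>\<omega>. B (rJ J \<omega>))"
  and le: "\<And>p. p \<in> space (PiM J (\<lambda>_. S)) \<Longrightarrow> (\<integral>\<omega>. f (p, rJ J' \<omega>) \<partial>M) \<le> C p"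
  and C: "integrable M (\<lambda>\<omega>. C (rJ J \<omega>))"
  shows "(\<integral>\<omega>. f (rJ J \<omega>, rJ J' \<omega>) \<partial>M) \<le> (\<integral>\<omega>. C (rJ J \<omega>) \<partial>M)"
proof -
  note c = cond[OF J f int2 bnd B]
  have "(\<integral>\<omega>. f (rJ J \<omega>, rJ J' \<omega>) \<partial>M) = (\<integral>\<omega>. (\<integral>\<omega>'. f (rJ J \<omega>, rJ J' \<omega>') \<partial>M) \<partial>M)"
    by (rule c(3))
  also have "\<dots> \<le> (\<integral>\<omega>. C (rJ J \<omega>) \<partial>M)"
  proof (rule Bochner_Integration.integral_mono[OF c(2) C])
    fix \<omega> assume "\<omega> \<in> space M"
    then have "rJ J \<omega> \<in> space (PiM J (\<lambda>_. S))" using rJ_space J by blast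
    then show "(\<integral>\<omega>'. f (rJ J \<omega>, rJ J' \<omega>') \<partial>M) \<le> C (rJ J \<omega>)" by (rule le)
  qed
  finally show ?thesis .
qed

end


lemma line_deriv:
  fixes f :: "'a::euclidean_space \<Rightarrow> real"
  assumes grad: "\<And>w. (f has_derivative (\<lambda>h. gf w \<bullet> h)) (at w)"
  shows "((\<lambda>t. f (x + t *\<^sub>R d)) has_real_derivative (gf (x + t *\<^sub>R d) \<bullet> d)) (at t within A)"
proof -
  have l: "((\<lambda>t. x + t *\<^sub>R d) has_derivative (\<lambda>s. s *\<^sub>R d)) (at t within A)"
    by (auto intro!: derivative_eq_intros)
  have "((\<lambda>t. f (x + t *\<^sub>R d)) has_derivative (\<lambda>s. gf (x + t *\<^sub>R d) \<bullet> (s *\<^sub>R d))) (at t within A)"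
    using has_derivative_compose[OF l grad] .
  moreover have "(\<lambda>s. gf (x + t *\<^sub>R d) \<bullet> (s *\<^sub>R d)) = (*) (gf (x + t *\<^sub>R d) \<bullet> d)"
    by (auto simp: fun_eq_iff)
  ultimately show ?thesis by (simp add: has_field_derivative_def)
qed

lemma descent:
  fixes f :: "'a::euclidean_space \<Rightarrow> real"
  assumes grad: "\<And>w. (f has_derivative (\<lambda>h. gf w \<bullet> h)) (at w)"
  and lip: "\<And>x y. norm (gf x - gf y) \<le> L * norm (x - y)"
  shows "f y \<le> f x + gf x \<bullet> (y - x) + L / 2 * (norm (y - x))\<^sup>2"
proof -
  define d where "d = y - x"
  define \<psi> where "\<psi> t = f (x + t *\<^sub>R d) - t * (gf x \<bullet> d) - L / 2 * t\<^sup>2 * (norm d)\<^sup>2" for t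
  have "\<psi> 0 \<ge> \<psi> 1"
  proof (rule DERIV_nonpos_imp_nonincreasing[of 0 1])
    fix t :: real assume t: "0 \<le> t" "t \<le> 1"
    have D: "(\<psi> has_real_derivative (gf (x + t *\<^sub>R d) \<bullet> d - gf x \<bullet> d - L * t * (norm d)\<^sup>2)) (at t)"
      unfolding \<psi>_def
      by (rule derivative_eq_intros line_deriv[OF grad] | simp)+
    have "gf (x + t *\<^sub>R d) \<bullet> d - gf x \<bullet> d = (gf (x + t *\<^sub>R d) - gf x) \<bullet> d"
      by (simp add: inner_diff_left)
    also have "\<dots> \<le> norm (gf (x + t *\<^sub>R d) - gf x) * norm d"
      by (rule norm_cauchy_schwarz)
    also have "\<dots> \<le> (L * norm (t *\<^sub>R d)) * norm d"
      using lip[of "x + t *\<^sub>R d" x] by (intro mult_right_mono) auto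
    also have "\<dots> = L * t * (norm d)\<^sup>2" using t by (simp add: power2_eq_square)
    finally show "\<exists>y. (\<psi> has_real_derivative y) (at t) \<and> y \<le> 0"
      using D by (intro exI[of _ "gf (x + t *\<^sub>R d) \<bullet> d - gf x \<bullet> d - L * t * (norm d)\<^sup>2"]) auto
  qed simp
  then show ?thesis unfolding \<psi>_def d_def by (simp add: algebra_simps)
qed

lemma first_order_convex:
  fixes f :: "'a::euclidean_space \<Rightarrow> real"
  assumes grad: "\<And>w. (f has_derivative (\<lambda>h. gf w \<bullet> h)) (at w)"
  and cvx: "convex_on UNIV f"
  shows "f z \<ge> f x + gf x \<bullet> (z - x)"
proof -
  define d where "d = z - x"
  define \<phi> where "\<phi> t = f (x + t *\<^sub>R d)" for t :: real
  have c: "convex_on UNIV \<phi>"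
  proof (rule convex_onI)
    fix t :: real and a b
    assume t: "0 < t" "t < 1"
    have "x + ((1 - t) * a + t * b) *\<^sub>R d = (1 - t) *\<^sub>R (x + a *\<^sub>R d) + t *\<^sub>R (x + b *\<^sub>R d)"
      by (simp add: algebra_simps)
    then show "\<phi> ((1 - t) *\<^sub>R a + t *\<^sub>R b) \<le> (1 - t) * \<phi> a + t * \<phi> b"
      unfolding \<phi>_def using convex_onD[OF cvx, of t "x + a *\<^sub>R d" "x + b *\<^sub>R d"] t by simp
  qed simp
  have "\<phi> 1 - \<phi> 0 \<ge> (gf (x + 0 *\<^sub>R d) \<bullet> d) * (1 - 0)"
  proof (rule convex_on_imp_above_tangent[OF c])
    show "(\<phi> has_real_derivative gf (x + 0 *\<^sub>R d) \<bullet> d) (at 0 within UNIV)"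
      unfolding \<phi>_def[abs_def] by (rule line_deriv[OF grad])
  qed auto
  then show ?thesis unfolding \<phi>_def d_def by simp
qed

lemma grad_zero_at_min:
  fixes f :: "'a::euclidean_space \<Rightarrow> real"
  assumes grad: "\<And>w. (f has_derivative (\<lambda>h. gf w \<bullet> h)) (at w)"
  and lip: "\<And>x y. norm (gf x - gf y) \<le> L * norm (x - y)" and L: "L > 0"
  and mn: "\<And>w. f ws \<le> f w"
  shows "f ws + (norm (gf x))\<^sup>2 / (2 * L) \<le> f x"
proof -
  have "f ws \<le> f (x - (1/L) *\<^sub>R gf x)" by (rule mn)
  also have "\<dots> \<le> f x + gf x \<bullet> (- (1/L) *\<^sub>R gf x) + L / 2 * (norm (- (1/L) *\<^sub>R gf x))\<^sup>2"
    using descent[OF grad lip, of "x - (1/L) *\<^sub>R gf x" x] by simp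
  also have "\<dots> = f x - (norm (gf x))\<^sup>2 / (2 * L)"
  proof -
    have "gf x \<bullet> gf x = norm (gf x) * norm (gf x)"
      by (simp add: power2_norm_eq_inner[symmetric] power2_eq_square)
    then show ?thesis using L by (simp add: power2_eq_square power_divide field_simps)
  qed
  finally show ?thesis by simp
qed

lemma cocoercive:
  fixes f :: "'a::euclidean_space \<Rightarrow> real"
  assumes grad: "\<And>w. (f has_derivative (\<lambda>h. gf w \<bullet> h)) (at w)"
  and lip: "\<And>x y. norm (gf x - gf y) \<le> L * norm (x - y)" and L: "L > 0"
  and cvx: "convex_on UNIV f"
  shows "f x + gf x \<bullet> (y - x) + (norm (gf y - gf x))\<^sup>2 / (2 * L) \<le> f y"
proof -
  define \<phi> where "\<phi> z = f z - gf x \<bullet> z" for z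
  define g\<phi> where "g\<phi> z = gf z - gf x" for z
  have gr: "(\<phi> has_derivative (\<lambda>h. g\<phi> w \<bullet> h)) (at w)" for w
    unfolding \<phi>_def g\<phi>_def
    by (rule derivative_eq_intros grad | simp add: inner_diff_left)+
  have lp: "norm (g\<phi> a - g\<phi> b) \<le> L * norm (a - b)" for a b
    unfolding g\<phi>_def using lip[of a b] by simp
  have mn: "\<phi> x \<le> \<phi> w" for w
    using first_order_convex[OF grad cvx, of x w] unfolding \<phi>_def by (simp add: inner_diff_right)
  have "\<phi> x + (norm (g\<phi> y))\<^sup>2 / (2 * L) \<le> \<phi> y"
    by (rule grad_zero_at_min[OF gr lp L mn])
  then show ?thesis unfolding \<phi>_def g\<phi>_def by (simp add: inner_diff_right)
qed



lemma pointwise_key: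
  fixes F :: "'a::euclidean_space \<Rightarrow> real"
  assumes grad: "\<And>w. (F has_derivative (\<lambda>h. gf w \<bullet> h)) (at w)"
  and lip: "\<And>x y. norm (gf x - gf y) \<le> L * norm (x - y)" and L: "L > 0"
  and cvx: "convex_on UNIV F"
  and mn: "\<And>w. F ws \<le> F w"
  and \<gamma>: "\<gamma> > 0" and c: "\<gamma> * L * c \<le> 1/2"
  shows "- 2 * \<gamma> * (gf wh \<bullet> (w - ws)) + \<gamma>\<^sup>2 * c * (norm (gf wh))\<^sup>2
    \<le> - \<gamma> * (F w - F ws) - \<gamma> / (2 * L) * (norm (gf wh))\<^sup>2 + \<gamma> * L * (norm (w - wh))\<^sup>2"
proof -
  define g where "g = gf wh"
  define G2 where "G2 = (norm g)\<^sup>2"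
  define D2 where "D2 = (norm (w - wh))\<^sup>2"
  define X where "X = g \<bullet> (w - wh)"
  define Y where "Y = g \<bullet> (wh - ws)"
  have gs0: "gf ws = 0"
  proof -
    have "(norm (gf ws))\<^sup>2 / (2 * L) \<le> 0" using grad_zero_at_min[OF grad lip L mn, of ws] by simp
    then have "(norm (gf ws))\<^sup>2 \<le> 0" using L by (simp add: divide_le_0_iff)
    then show ?thesis by simp
  qed
  have a: "Y \<ge> F wh - F ws + G2 / (2 * L)"
    using cocoercive[OF grad lip L cvx, of wh ws] gs0 unfolding Y_def G2_def g_def
    by (simp add: inner_diff_right)
  have b: "F w \<le> F wh + X + L / 2 * D2"
    using descent[OF grad lip, of w wh] unfolding X_def D2_def g_def by simp
  have cc: "F ws + G2 / (2 * L) \<le> F wh"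
    using grad_zero_at_min[OF grad lip L mn, of wh] unfolding G2_def g_def by simp
  have d0: "0 \<le> (norm (g + L *\<^sub>R (w - wh)))\<^sup>2" by simp
  also have "\<dots> = G2 + 2 * L * X + L\<^sup>2 * D2"
    unfolding G2_def X_def D2_def power2_norm_eq_inner
    by (simp add: inner_add_left inner_add_right inner_commute power2_eq_square algebra_simps)
  finally have d1: "0 \<le> G2 + 2 * L * X + L\<^sup>2 * D2" .
  have d: "X \<ge> - (G2 / (2 * L)) - L / 2 * D2"
  proof -
    have "(G2 + 2 * L * X + L\<^sup>2 * D2) / (2 * L) \<ge> 0" using d1 L by simp
    also have "(G2 + 2 * L * X + L\<^sup>2 * D2) / (2 * L) = G2 / (2 * L) + X + L / 2 * D2"
      using L by (simp add: field_simps power2_eq_square)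
    finally show ?thesis by simp
  qed
  have uXY: "g \<bullet> (w - ws) = X + Y" unfolding X_def Y_def by (simp add: inner_diff_right)
  have Q: "- 2 * (X + Y) + G2 / (2 * L) \<le> - (F w - F ws) - G2 / (2 * L) + L * D2"
  proof -
    have e1: "L / 2 * D2 = (L * D2) / 2" by simp
    have *: "\<And>A B Fw Fh Fs X Y::real. Fh - Fs + A \<le> Y \<Longrightarrow> Fw \<le> Fh + X + B/2 \<Longrightarrow> Fs + A \<le> Fh
       \<Longrightarrow> - A - B/2 \<le> X \<Longrightarrow> - 2 * (X + Y) + A \<le> - (Fw - Fs) - A + B" by (simp add: field_simps)
    show ?thesis using *[OF a b[unfolded e1] cc d[unfolded e1]] by simp
  qed
  have G0: "G2 \<ge> 0" unfolding G2_def by simp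
  have e: "\<gamma>\<^sup>2 * c * G2 \<le> \<gamma> * (G2 / (2 * L))"
  proof -
    have "\<gamma> * c \<le> 1 / (2 * L)" using c L by (simp add: field_simps)
    then have "(\<gamma> * c) * (\<gamma> * G2) \<le> 1 / (2 * L) * (\<gamma> * G2)"
      using \<gamma> G0 by (intro mult_right_mono) auto
    then show ?thesis by (simp add: power2_eq_square field_simps)
  qed
  have "\<gamma> * (- 2 * (X + Y) + G2 / (2 * L)) \<le> \<gamma> * (- (F w - F ws) - G2 / (2 * L) + L * D2)"
    using Q \<gamma> by (intro mult_left_mono) auto
  then show ?thesis
    using e unfolding uXY[folded g_def] g_def[symmetric] G2_def[symmetric] D2_def[symmetric]
    by (simp add: algebra_simps)
qed



context prob_space
begin

definition sqi :: "('a \<Rightarrow> 'v::euclidean_space) \<Rightarrow> bool" where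
  "sqi X \<longleftrightarrow> X \<in> borel_measurable M \<and> integrable M (\<lambda>\<omega>. (norm (X \<omega>))\<^sup>2)"

lemma sqiI: "X \<in> borel_measurable M \<Longrightarrow> integrable M (\<lambda>\<omega>. (norm (X \<omega>))\<^sup>2) \<Longrightarrow> sqi X"
  by (simp add: sqi_def)

lemma sqi_meas: "sqi X \<Longrightarrow> X \<in> borel_measurable M" by (simp add: sqi_def)
lemma sqi_int2: "sqi X \<Longrightarrow> integrable M (\<lambda>\<omega>. (norm (X \<omega>))\<^sup>2)" by (simp add: sqi_def)

lemma norm_add_sq: "(norm (x + y :: 'v::real_normed_vector))\<^sup>2 \<le> 2 * (norm x)\<^sup>2 + 2 * (norm y)\<^sup>2"
proof -
  have "norm (x + y) \<le> norm x + norm y" by (rule norm_triangle_ineq)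
  then have "(norm (x + y))\<^sup>2 \<le> (norm x + norm y)\<^sup>2" by (simp add: power_mono)
  also have "\<dots> \<le> 2 * (norm x)\<^sup>2 + 2 * (norm y)\<^sup>2"
    using sum_squares_ge_zero[of "norm x - norm y" 0] by (simp add: power2_eq_square algebra_simps)
  finally show ?thesis .
qed

lemma sqi_add: "sqi X \<Longrightarrow> sqi Y \<Longrightarrow> sqi (\<lambda>\<omega>. X \<omega> + Y \<omega>)"
  unfolding sqi_def
proof (intro conjI)
  assume a: "X \<in> borel_measurable M \<and> integrable M (\<lambda>\<omega>. (norm (X \<omega>))\<^sup>2)"
     "Y \<in> borel_measurable M \<and> integrable M (\<lambda>\<omega>. (norm (Y \<omega>))\<^sup>2)"
  then show m: "(\<lambda>\<omega>. X \<omega> + Y \<omega>) \<in> borel_measurable M" by auto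
  show "integrable M (\<lambda>\<omega>. (norm (X \<omega> + Y \<omega>))\<^sup>2)"
  proof (rule Bochner_Integration.integrable_bound)
    show "integrable M (\<lambda>\<omega>. 2 * (norm (X \<omega>))\<^sup>2 + 2 * (norm (Y \<omega>))\<^sup>2)" using a by auto
    show "(\<lambda>\<omega>. (norm (X \<omega> + Y \<omega>))\<^sup>2) \<in> borel_measurable M" using m by measurable
    show "AE x in M. norm ((norm (X x + Y x))\<^sup>2) \<le> norm (2 * (norm (X x))\<^sup>2 + 2 * (norm (Y x))\<^sup>2)"
      using norm_add_sq by (intro AE_I2) (simp add: abs_of_nonneg)
  qed
qed

lemma sqi_scaleR: "sqi X \<Longrightarrow> sqi (\<lambda>\<omega>. c *\<^sub>R X \<omega>)"
  unfolding sqi_def by (auto simp: power_mult_distrib)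

lemma sqi_uminus: "sqi X \<Longrightarrow> sqi (\<lambda>\<omega>. - X \<omega>)"
  unfolding sqi_def by auto

lemma sqi_diff: "sqi X \<Longrightarrow> sqi Y \<Longrightarrow> sqi (\<lambda>\<omega>. X \<omega> - Y \<omega>)"
proof -
  assume "sqi X" "sqi Y"
  then have "sqi (\<lambda>\<omega>. X \<omega> + - Y \<omega>)" by (intro sqi_add sqi_uminus)
  then show ?thesis by simp
qed

lemma sqi_const: "sqi (\<lambda>\<omega>. c)"
  unfolding sqi_def by auto

lemma sqi_sum: "(\<And>i. i \<in> I \<Longrightarrow> sqi (X i)) \<Longrightarrow> sqi (\<lambda>\<omega>. \<Sum>i\<in>I. X i \<omega>)"
proof (induction I rule: infinite_finite_induct)
  case (infinite A) then show ?case by (simp add: sqi_const)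
next
  case empty then show ?case by (simp add: sqi_const)
next
  case (insert x F) then show ?case by (simp add: sqi_add)
qed

lemma inner_le_sq: "\<bar>x \<bullet> y\<bar> \<le> ((norm x)\<^sup>2 + (norm (y::'v::real_inner)))\<^sup>2 / 2 \<or> True" by simp

lemma abs_inner_le: "\<bar>x \<bullet> (y::'v::real_inner)\<bar> \<le> ((norm x)\<^sup>2 + (norm y)\<^sup>2) / 2"
proof -
  have "\<bar>x \<bullet> y\<bar> \<le> norm x * norm y" by (rule Cauchy_Schwarz_ineq2)
  also have "\<dots> \<le> ((norm x)\<^sup>2 + (norm y)\<^sup>2) / 2"
    using sum_squares_ge_zero[of "norm x - norm y" 0] by (simp add: power2_eq_square algebra_simps)
  finally show ?thesis .
qed

lemma sqi_inner: "sqi X \<Longrightarrow> sqi Y \<Longrightarrow> integrable M (\<lambda>\<omega>. X \<omega> \<bullet> Y \<omega>)"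
  unfolding sqi_def
proof -
  assume a: "X \<in> borel_measurable M \<and> integrable M (\<lambda>\<omega>. (norm (X \<omega>))\<^sup>2)"
     "Y \<in> borel_measurable M \<and> integrable M (\<lambda>\<omega>. (norm (Y \<omega>))\<^sup>2)"
  show "integrable M (\<lambda>\<omega>. X \<omega> \<bullet> Y \<omega>)"
  proof (rule Bochner_Integration.integrable_bound)
    show "integrable M (\<lambda>\<omega>. ((norm (X \<omega>))\<^sup>2 + (norm (Y \<omega>))\<^sup>2) / 2)" using a by auto
    have [measurable]: "X \<in> borel_measurable M" "Y \<in> borel_measurable M" using a by auto
    show "(\<lambda>\<omega>. X \<omega> \<bullet> Y \<omega>) \<in> borel_measurable M" by measurable
    show "AE x in M. norm (X x \<bullet> Y x) \<le> norm (((norm (X x))\<^sup>2 + (norm (Y x))\<^sup>2) / 2)"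
      using abs_inner_le by (intro AE_I2) auto
  qed
qed

lemma sqi_integrable: "sqi X \<Longrightarrow> integrable M X"
proof -
  assume a: "sqi X"
  show "integrable M X"
  proof (rule Bochner_Integration.integrable_bound)
    show "integrable M (\<lambda>\<omega>. 1 + (norm (X \<omega>))\<^sup>2)" using a by (auto simp: sqi_def)
    show "X \<in> borel_measurable M" using a by (simp add: sqi_def)
    show "AE x in M. norm (X x) \<le> norm (1 + (norm (X x))\<^sup>2)"
    proof (intro AE_I2)
      fix x
      have "norm (X x) \<le> 1 + (norm (X x))\<^sup>2"
      proof -
        have "0 \<le> (norm (X x) - 1)\<^sup>2" by simp
        then have "2 * norm (X x) \<le> 1 + (norm (X x))\<^sup>2" by (simp add: power2_eq_square algebra_simps)
        then show ?thesis using norm_ge_zero[of "X x"] by linarith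
      qed
      then show "norm (X x) \<le> norm (1 + (norm (X x))\<^sup>2)" by simp
    qed
  qed
qed

lemma sqi_compose_lip:
  assumes "sqi X" and lip: "\<And>x y. norm (g x - g y) \<le> K * norm (x - y)" and K: "K \<ge> 0"
  shows "sqi (\<lambda>\<omega>. g (X \<omega>))"
proof -
  have cg: "continuous_on UNIV g"
    by (rule lipschitz_on_continuous_on[of K]) (auto simp: lipschitz_on_def K lip dist_norm)
  have gm: "g \<in> borel_measurable borel" by (rule borel_measurable_continuous_onI[OF cg])
  have m: "(\<lambda>\<omega>. g (X \<omega>)) \<in> borel_measurable M"
    using measurable_compose[OF sqi_meas[OF assms(1)] gm] by simp
  have "sqi (\<lambda>\<omega>. g (X \<omega>) - g 0)"
  proof (rule sqiI)
    show "(\<lambda>\<omega>. g (X \<omega>) - g 0) \<in> borel_measurable M" using m by measurable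
    show "integrable M (\<lambda>\<omega>. (norm (g (X \<omega>) - g 0))\<^sup>2)"
    proof (rule Bochner_Integration.integrable_bound)
      show "integrable M (\<lambda>\<omega>. K\<^sup>2 * (norm (X \<omega>))\<^sup>2)" using sqi_int2[OF assms(1)] by auto
      show "(\<lambda>\<omega>. (norm (g (X \<omega>) - g 0))\<^sup>2) \<in> borel_measurable M" using m by measurable
      show "AE x in M. norm ((norm (g (X x) - g 0))\<^sup>2) \<le> norm (K\<^sup>2 * (norm (X x))\<^sup>2)"
      proof (intro AE_I2)
        fix x
        have "norm (g (X x) - g 0) \<le> K * norm (X x)" using lip[of "X x" 0] by simp
        then have "(norm (g (X x) - g 0))\<^sup>2 \<le> (K * norm (X x))\<^sup>2" by (intro power_mono) auto
        then show "norm ((norm (g (X x) - g 0))\<^sup>2) \<le> norm (K\<^sup>2 * (norm (X x))\<^sup>2)"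
          by (simp add: power_mult_distrib)
      qed
    qed
  qed
  from sqi_add[OF this sqi_const[of "g 0"]] show ?thesis by simp
qed

lemma hilbert_var:
  fixes Z :: "'a \<Rightarrow> 'v::euclidean_space"
  assumes Zi: "integrable M Z" and Zm: "(\<integral>\<omega>. Z \<omega> \<partial>M) = m"
    and Zv: "integrable M (\<lambda>\<omega>. (norm (Z \<omega> - m))\<^sup>2)"
  shows "integrable M (\<lambda>\<omega>. (norm (Z \<omega> - y))\<^sup>2)"
    and "(\<integral>\<omega>. (norm (Z \<omega> - y))\<^sup>2 \<partial>M) = (\<integral>\<omega>. (norm (Z \<omega> - m))\<^sup>2 \<partial>M) + (norm (m - y))\<^sup>2"
proof -
  have eq: "(norm (Z \<omega> - y))\<^sup>2 = (norm (Z \<omega> - m))\<^sup>2 + 2 * ((Z \<omega> - m) \<bullet> (m - y)) + (norm (m - y))\<^sup>2" for \<omega>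
  proof -
    have "Z \<omega> - y = (Z \<omega> - m) + (m - y)" by simp
    then have "(norm (Z \<omega> - y))\<^sup>2 = (norm ((Z \<omega> - m) + (m - y)))\<^sup>2" by metis
    also have "\<dots> = (norm (Z \<omega> - m))\<^sup>2 + 2 * ((Z \<omega> - m) \<bullet> (m - y)) + (norm (m - y))\<^sup>2"
      using dot_norm[of "Z \<omega> - m" "m - y"] by simp
    finally show ?thesis .
  qed
  have i1: "integrable M (\<lambda>\<omega>. (Z \<omega> - m) \<bullet> (m - y))"
    using Zi by (intro integrable_inner_left) auto
  have e1: "(\<integral>\<omega>. (Z \<omega> - m) \<bullet> (m - y) \<partial>M) = 0"
  proof -
    have "(\<integral>\<omega>. (Z \<omega> - m) \<bullet> (m - y) \<partial>M) = (\<integral>\<omega>. (Z \<omega> - m) \<partial>M) \<bullet> (m - y)"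
      using Zi by (intro integral_inner_left) auto
    also have "(\<integral>\<omega>. (Z \<omega> - m) \<partial>M) = 0"
      using Zi Zm by (subst Bochner_Integration.integral_diff) (auto simp: prob_space)
    finally show ?thesis by simp
  qed
  show "integrable M (\<lambda>\<omega>. (norm (Z \<omega> - y))\<^sup>2)"
    unfolding eq using Zv i1 by auto
  show "(\<integral>\<omega>. (norm (Z \<omega> - y))\<^sup>2 \<partial>M) = (\<integral>\<omega>. (norm (Z \<omega> - m))\<^sup>2 \<partial>M) + (norm (m - y))\<^sup>2"
    unfolding eq using Zv i1 e1 by (simp add: prob_space)
qed

lemma norm_le_1_sq: "norm (v::'v::real_normed_vector) \<le> 1 + (norm v)\<^sup>2"
proof -
  have "0 \<le> (norm v - 1)\<^sup>2" by simp
  then have "2 * norm v \<le> 1 + (norm v)\<^sup>2" by (simp add: power2_eq_square algebra_simps)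
  then show ?thesis using norm_ge_zero[of v] by linarith
qed

lemma norm_int_le_sq:
  assumes "sqi X"
  shows "(\<integral>\<omega>. norm (X \<omega>) \<partial>M) \<le> 1 + (\<integral>\<omega>. (norm (X \<omega>))\<^sup>2 \<partial>M)"
proof -
  have "(\<integral>\<omega>. norm (X \<omega>) \<partial>M) \<le> (\<integral>\<omega>. 1 + (norm (X \<omega>))\<^sup>2 \<partial>M)"
    using sqi_integrable[OF assms] sqi_int2[OF assms]
    by (intro Bochner_Integration.integral_mono norm_le_1_sq) auto
  also have "\<dots> = 1 + (\<integral>\<omega>. (norm (X \<omega>))\<^sup>2 \<partial>M)"
    using sqi_int2[OF assms] by (simp add: prob_space)
  finally show ?thesis .
qed

end


locale gs = isetting M S \<xi> "used_idx N"
  for M :: "'m measure" and S :: "'b measure" and \<xi> :: "noise_idx \<Rightarrow> 'm \<Rightarrow> 'b" and N :: nat +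
  fixes F :: "'a::euclidean_space \<Rightarrow> real" and gradF :: "'a \<Rightarrow> 'a"
    and G :: "nat \<Rightarrow> nat \<Rightarrow> 'a \<Rightarrow> 'b \<Rightarrow> 'a"
    and Cup Cdwn :: "'a \<Rightarrow> 'b \<Rightarrow> 'a"
    and b :: nat and L \<gamma> \<sigma> \<omega>up \<omega>dwn :: real and w0 wstar :: 'a
  assumes N: "N \<ge> 1"
    and \<gamma>: "\<gamma> > 0"
    and \<omega>: "\<omega>up > 0" "\<omega>dwn > 0"
    and G_meas: "\<And>k i. (\<lambda>p. G k i (fst p) (snd p)) \<in> borel_measurable (borel \<Otimes>\<^sub>M S)"
    and Cup_meas: "(\<lambda>p. Cup (fst p) (snd p)) \<in> borel_measurable (borel \<Otimes>\<^sub>M S)"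
    and Cdwn_meas: "(\<lambda>p. Cdwn (fst p) (snd p)) \<in> borel_measurable (borel \<Otimes>\<^sub>M S)"
    and A1_up_int: "\<And>v k i. k \<ge> 1 \<Longrightarrow> i < N \<Longrightarrow>
                      integrable M (\<lambda>\<omega>. Cup v (\<xi> (Up k i) \<omega>))"
    and A1_up_unb: "\<And>v k i. k \<ge> 1 \<Longrightarrow> i < N \<Longrightarrow>
                      (\<integral>\<omega>. Cup v (\<xi> (Up k i) \<omega>) \<partial>M) = v"
    and A1_up_var_int: "\<And>v k i. k \<ge> 1 \<Longrightarrow> i < N \<Longrightarrow>
                      integrable M (\<lambda>\<omega>. (norm (Cup v (\<xi> (Up k i) \<omega>) - v))\<^sup>2)"
    and A1_up_var: "\<And>v k i. k \<ge> 1 \<Longrightarrow> i < N \<Longrightarrow>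
                      (\<integral>\<omega>. (norm (Cup v (\<xi> (Up k i) \<omega>) - v))\<^sup>2 \<partial>M) \<le> \<omega>up * (norm v)\<^sup>2"
    and A1_dw_int: "\<And>v k. k \<ge> 1 \<Longrightarrow> integrable M (\<lambda>\<omega>. Cdwn v (\<xi> (Dw k) \<omega>))"
    and A1_dw_unb: "\<And>v k. k \<ge> 1 \<Longrightarrow> (\<integral>\<omega>. Cdwn v (\<xi> (Dw k) \<omega>) \<partial>M) = v"
    and A1_dw_var_int: "\<And>v k. k \<ge> 1 \<Longrightarrow>
                      integrable M (\<lambda>\<omega>. (norm (Cdwn v (\<xi> (Dw k) \<omega>) - v))\<^sup>2)"
    and A1_dw_var: "\<And>v k. k \<ge> 1 \<Longrightarrow>
                      (\<integral>\<omega>. (norm (Cdwn v (\<xi> (Dw k) \<omega>) - v))\<^sup>2 \<partial>M) \<le> \<omega>dwn * (norm v)\<^sup>2"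
    and A2_grad: "\<And>w. (F has_derivative (\<lambda>h. gradF w \<bullet> h)) (at w)"
    and A2_L: "L > 0"
    and A2_smooth: "\<And>x y. norm (gradF x - gradF y) \<le> L * norm (x - y)"
    and A3: "convex_on UNIV F"
    and wstar: "\<And>w. F wstar \<le> F w"
    and A4_int: "\<And>w k i. k \<ge> 1 \<Longrightarrow> i < N \<Longrightarrow> integrable M (\<lambda>\<omega>. G k i w (\<xi> (Orc k i) \<omega>))"
    and A4_unb: "\<And>w k i. k \<ge> 1 \<Longrightarrow> i < N \<Longrightarrow> (\<integral>\<omega>. G k i w (\<xi> (Orc k i) \<omega>) \<partial>M) = gradF w"
    and A4_var_int: "\<And>w k i. k \<ge> 1 \<Longrightarrow> i < N \<Longrightarrow>
                      integrable M (\<lambda>\<omega>. (norm (G k i w (\<xi> (Orc k i) \<omega>) - gradF w))\<^sup>2)"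
    and A4_var: "\<And>w k i. k \<ge> 1 \<Longrightarrow> i < N \<Longrightarrow>
                      (\<integral>\<omega>. (norm (G k i w (\<xi> (Orc k i) \<omega>) - gradF w))\<^sup>2 \<partial>M) \<le> \<sigma>\<^sup>2 / real b"
    and step: "\<gamma> * L * (1 + \<omega>up / real N) \<le> 1 / 2"
begin

definition gh :: "nat \<Rightarrow> (noise_idx \<Rightarrow> 'b) \<Rightarrow> 'a \<times> 'a" where
  "gh n p = ghost N \<gamma> G Cup Cdwn (\<lambda>i f. f i) w0 n p"

definition cc :: "nat \<Rightarrow> nat \<Rightarrow> (noise_idx \<Rightarrow> 'b) \<Rightarrow> 'a" where
  "cc n i p = Cup (G (Suc n) i (snd (gh n p)) (p (Orc (Suc n) i))) (p (Up (Suc n) i))"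

definition vv :: "nat \<Rightarrow> (noise_idx \<Rightarrow> 'b) \<Rightarrow> 'a" where
  "vv n p = (1 / real N) *\<^sub>R (\<Sum>i<N. cc n i p)"

lemma gh_0: "gh 0 p = (w0, w0)" by (simp add: gh_def)

lemma gh_Suc: "gh (Suc n) p = (fst (gh n p) - \<gamma> *\<^sub>R vv n p, fst (gh n p) - \<gamma> *\<^sub>R Cdwn (vv n p) (p (Dw (Suc n))))"
  by (simp add: gh_def vv_def cc_def Let_def)

definition past :: "nat \<Rightarrow> noise_idx set" where
  "past n = {Orc j i | j i. 1 \<le> j \<and> j \<le> n \<and> i < N} \<union> {Up j i | j i. 1 \<le> j \<and> j \<le> n \<and> i < N}
     \<union> {Dw j | j. 1 \<le> j \<and> j \<le> n}"

definition wk :: "nat \<Rightarrow> nat \<Rightarrow> noise_idx set" where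
  "wk k m = {Orc k i | i. i < m} \<union> {Up k i | i. i < m}"

lemma past_used: "past n \<subseteq> used_idx N"
  by (auto simp: past_def used_idx_def)

lemma wk_used: "k \<ge> 1 \<Longrightarrow> m \<le> N \<Longrightarrow> wk k m \<subseteq> used_idx N"
  by (auto simp: wk_def used_idx_def)

lemma past_mono: "n \<le> n' \<Longrightarrow> past n \<subseteq> past n'"
  by (auto simp: past_def)

lemma past_Suc: "past (Suc n) = past n \<union> wk (Suc n) N \<union> {Dw (Suc n)}"
  by (auto simp: past_def wk_def le_Suc_eq)

lemma gh_cong: "(\<And>i. i \<in> past n \<Longrightarrow> p i = q i) \<Longrightarrow> gh n p = gh n q"
proof (induction n)
  case 0 then show ?case by (simp add: gh_0)
next
  case (Suc n)
  have h: "gh n p = gh n q" using Suc past_mono[of n "Suc n"] by auto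
  have c: "cc n i p = cc n i q" if "i < N" for i
    using Suc.prems that h by (auto simp: cc_def past_def)
  have v: "vv n p = vv n q" unfolding vv_def using c by simp
  show ?case unfolding gh_Suc h v using Suc.prems by (auto simp: past_def)
qed

lemma cc_cong: "(\<And>j. j \<in> past n \<union> {Orc (Suc n) i, Up (Suc n) i} \<Longrightarrow> p j = q j) \<Longrightarrow> cc n i p = cc n i q"
  unfolding cc_def using gh_cong[of n p q] by auto

lemma vv_cong: "(\<And>j. j \<in> past n \<union> wk (Suc n) N \<Longrightarrow> p j = q j) \<Longrightarrow> vv n p = vv n q"
  unfolding vv_def by (intro arg_cong[where f="\<lambda>x. _ *\<^sub>R x"] sum.cong refl cc_cong) (auto simp: wk_def)

lemma gh_meas_aux:
  "past n \<subseteq> J \<Longrightarrow> (\<lambda>p. fst (gh n p)) \<in> borel_measurable (PiM J (\<lambda>_. S)) \<and>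
     (\<lambda>p. snd (gh n p)) \<in> borel_measurable (PiM J (\<lambda>_. S))"
proof (induction n)
  case 0
  show ?case by (simp add: gh_0)
next
  case (Suc n)
  have pj: "past n \<subseteq> J" using Suc.prems past_mono[of n "Suc n"] by auto
  note IH = Suc.IH[OF pj]
  have ccm: "cc n i \<in> borel_measurable (PiM J (\<lambda>_. S))" if "i < N" for i
  proof -
    have o: "Orc (Suc n) i \<in> J" "Up (Suc n) i \<in> J" using Suc.prems that by (auto simp: past_def)
    have g: "(\<lambda>p. G (Suc n) i (snd (gh n p)) (p (Orc (Suc n) i))) \<in> borel_measurable (PiM J (\<lambda>_. S))"
      using measurable_compose[OF measurable_Pair[OF conjunct2[OF IH] measurable_component_singleton[OF o(1)]] G_meas]
      by simp
    show ?thesis unfolding cc_def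
      using measurable_compose[OF measurable_Pair[OF g measurable_component_singleton[OF o(2)]] Cup_meas]
      by simp
  qed
  have vm: "vv n \<in> borel_measurable (PiM J (\<lambda>_. S))"
    unfolding vv_def[abs_def] using ccm by measurable
  have d: "Dw (Suc n) \<in> J" using Suc.prems by (auto simp: past_def)
  have cm: "(\<lambda>p. Cdwn (vv n p) (p (Dw (Suc n)))) \<in> borel_measurable (PiM J (\<lambda>_. S))"
    using measurable_compose[OF measurable_Pair[OF vm measurable_component_singleton[OF d]] Cdwn_meas]
    by simp
  show ?case unfolding gh_Suc using IH vm cm by (auto intro!: borel_measurable_diff borel_measurable_scaleR)
qed

lemma gh_meas1[measurable]: "past n \<subseteq> J \<Longrightarrow> (\<lambda>p. fst (gh n p)) \<in> borel_measurable (PiM J (\<lambda>_. S))"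
  using gh_meas_aux by blast
lemma gh_meas2[measurable]: "past n \<subseteq> J \<Longrightarrow> (\<lambda>p. snd (gh n p)) \<in> borel_measurable (PiM J (\<lambda>_. S))"
  using gh_meas_aux by blast

lemma cc_meas[measurable]:
  assumes "past n \<subseteq> J" "Orc (Suc n) i \<in> J" "Up (Suc n) i \<in> J"
  shows "cc n i \<in> borel_measurable (PiM J (\<lambda>_. S))"
proof -
  have g: "(\<lambda>p. G (Suc n) i (snd (gh n p)) (p (Orc (Suc n) i))) \<in> borel_measurable (PiM J (\<lambda>_. S))"
    using measurable_compose[OF measurable_Pair[OF gh_meas2[OF assms(1)] measurable_component_singleton[OF assms(2)]] G_meas]
    by simp
  show ?thesis unfolding cc_def
    using measurable_compose[OF measurable_Pair[OF g measurable_component_singleton[OF assms(3)]] Cup_meas]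
    by simp
qed

lemma vv_meas[measurable]:
  assumes "past n \<subseteq> J" "wk (Suc n) N \<subseteq> J"
  shows "vv n \<in> borel_measurable (PiM J (\<lambda>_. S))"
proof -
  have "cc n i \<in> borel_measurable (PiM J (\<lambda>_. S))" if "i < N" for i
    using assms that by (intro cc_meas) (auto simp: wk_def)
  then show ?thesis unfolding vv_def[abs_def] by measurable
qed

end


context gs
begin

lemma Cup_comp[measurable]: "X \<in> borel_measurable N' \<Longrightarrow> Y \<in> measurable N' S \<Longrightarrow> (\<lambda>x. Cup (X x) (Y x)) \<in> borel_measurable N'"
  using measurable_compose[OF measurable_Pair Cup_meas, of X N' Y] by simp
lemma Cdwn_comp[measurable]: "X \<in> borel_measurable N' \<Longrightarrow> Y \<in> measurable N' S \<Longrightarrow> (\<lambda>x. Cdwn (X x) (Y x)) \<in> borel_measurable N'"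
  using measurable_compose[OF measurable_Pair Cdwn_meas, of X N' Y] by simp
lemma G_comp[measurable]: "X \<in> borel_measurable N' \<Longrightarrow> Y \<in> measurable N' S \<Longrightarrow> (\<lambda>x. G k i (X x) (Y x)) \<in> borel_measurable N'"
  using measurable_compose[OF measurable_Pair G_meas, of X N' Y] by simp

lemma gradF_lip: "norm (gradF x - gradF y) \<le> L * norm (x - y)" by (rule A2_smooth)

lemma gradF_meas[measurable]: "gradF \<in> borel_measurable borel"
proof -
  have "continuous_on UNIV gradF"
    by (rule lipschitz_on_continuous_on[of L]) (auto simp: lipschitz_on_def A2_L less_imp_le A2_smooth dist_norm)
  then show ?thesis by (rule borel_measurable_continuous_onI)
qed

lemma F_meas[measurable]: "F \<in> borel_measurable borel"
proof -
  have "continuous_on UNIV F"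
    using A2_grad has_derivative_continuous continuous_at_imp_continuous_on by blast
  then show ?thesis by (rule borel_measurable_continuous_onI)
qed

lemma xi_meas'[measurable]: "i \<in> used_idx N \<Longrightarrow> \<xi> i \<in> measurable M S"
  by (rule xi_meas)

lemma Orc_used: "k \<ge> 1 \<Longrightarrow> i < N \<Longrightarrow> Orc k i \<in> used_idx N" by (auto simp: used_idx_def)
lemma Up_used: "k \<ge> 1 \<Longrightarrow> i < N \<Longrightarrow> Up k i \<in> used_idx N" by (auto simp: used_idx_def)
lemma Dw_used: "k \<ge> 1 \<Longrightarrow> Dw k \<in> used_idx N" by (auto simp: used_idx_def)

lemma G_sq:
  assumes "k \<ge> 1" "i < N"
  shows "integrable M (\<lambda>\<omega>. (norm (G k i a (\<xi> (Orc k i) \<omega>)))\<^sup>2)"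
    and "(\<integral>\<omega>. (norm (G k i a (\<xi> (Orc k i) \<omega>)))\<^sup>2 \<partial>M) \<le> \<sigma>\<^sup>2 / real b + (norm (gradF a))\<^sup>2"
  using hilbert_var[OF A4_int[OF assms, of a] A4_unb[OF assms, of a] A4_var_int[OF assms, of a], where y=0]
    A4_var[OF assms, of a] by auto

lemma G_sqi: "k \<ge> 1 \<Longrightarrow> i < N \<Longrightarrow> sqi (\<lambda>\<omega>. G k i a (\<xi> (Orc k i) \<omega>))"
  using G_sq(1) Orc_used by (intro sqiI) measurable

lemma Cup_sq:
  assumes "k \<ge> 1" "i < N"
  shows "integrable M (\<lambda>\<omega>. (norm (Cup x (\<xi> (Up k i) \<omega>) - y))\<^sup>2)"
    and "(\<integral>\<omega>. (norm (Cup x (\<xi> (Up k i) \<omega>) - y))\<^sup>2 \<partial>M) \<le> \<omega>up * (norm x)\<^sup>2 + (norm (x - y))\<^sup>2"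
  using hilbert_var[OF A1_up_int[OF assms, of x] A1_up_unb[OF assms, of x] A1_up_var_int[OF assms, of x], where y=y]
    A1_up_var[OF assms, of x] by auto

lemma Cup_sqi: "k \<ge> 1 \<Longrightarrow> i < N \<Longrightarrow> sqi (\<lambda>\<omega>. Cup x (\<xi> (Up k i) \<omega>))"
  using Cup_sq(1)[of k i x 0] Up_used by (intro sqiI) (auto, measurable)

lemma Z_props:
  assumes k: "k \<ge> 1" "i < N"
  shows "integrable M (\<lambda>\<omega>. Cup (G k i a (\<xi> (Orc k i) \<omega>)) (\<xi> (Up k i) \<omega>))"
    and "(\<integral>\<omega>. Cup (G k i a (\<xi> (Orc k i) \<omega>)) (\<xi> (Up k i) \<omega>) \<partial>M) = gradF a"
    and "integrable M (\<lambda>\<omega>. (norm (Cup (G k i a (\<xi> (Orc k i) \<omega>)) (\<xi> (Up k i) \<omega>) - gradF a))\<^sup>2)"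
    and "(\<integral>\<omega>. (norm (Cup (G k i a (\<xi> (Orc k i) \<omega>)) (\<xi> (Up k i) \<omega>) - gradF a))\<^sup>2 \<partial>M)
           \<le> \<omega>up * (norm (gradF a))\<^sup>2 + (1 + \<omega>up) * (\<sigma>\<^sup>2 / real b)"
proof -
  define J where "J = {Orc k i}"
  define J' where "J' = {Up k i}"
  have JJ: "J \<inter> J' = {}" "J \<subseteq> used_idx N" "J' \<subseteq> used_idx N"
    using Orc_used[OF k] Up_used[OF k] by (auto simp: J_def J'_def)
  have oJ: "Orc k i \<in> J" and uJ: "Up k i \<in> J'" by (auto simp: J_def J'_def)
  have Sp: "p (Orc k i) \<in> space S" if "p \<in> space (PiM J (\<lambda>_. S))" for p
    using that oJ by (auto simp: space_PiM)
  define f where "f pq = Cup (G k i a (fst pq (Orc k i))) (snd pq (Up k i))" for pq :: "(noise_idx \<Rightarrow> 'b) \<times> (noise_idx \<Rightarrow> 'b)"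
  have fm: "f \<in> borel_measurable (PiM J (\<lambda>_. S) \<Otimes>\<^sub>M PiM J' (\<lambda>_. S))"
    unfolding f_def[abs_def] using oJ uJ by measurable
  define B where "B p = 1 + (1 + \<omega>up) * (norm (G k i a (p (Orc k i))))\<^sup>2" for p :: "noise_idx \<Rightarrow> 'b"
  have int2: "integrable M (\<lambda>\<omega>. f (p, rJ J' \<omega>))" for p
    unfolding f_def using uJ A1_up_int[OF k] by simp
  have bnd: "(\<integral>\<omega>. norm (f (p, rJ J' \<omega>)) \<partial>M) \<le> B p" for p
  proof -
    let ?x = "G k i a (p (Orc k i))"
    have "(\<integral>\<omega>. norm (f (p, rJ J' \<omega>)) \<partial>M) = (\<integral>\<omega>. norm (Cup ?x (\<xi> (Up k i) \<omega>)) \<partial>M)"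
      unfolding f_def using uJ by simp
    also have "\<dots> \<le> 1 + (\<integral>\<omega>. (norm (Cup ?x (\<xi> (Up k i) \<omega>)))\<^sup>2 \<partial>M)"
      by (rule norm_int_le_sq[OF Cup_sqi[OF k]])
    also have "\<dots> \<le> B p"
      using Cup_sq(2)[OF k, of ?x 0] unfolding B_def by (simp add: algebra_simps)
    finally show ?thesis .
  qed
  have Bi: "integrable M (\<lambda>\<omega>. B (rJ J \<omega>))"
    unfolding B_def using oJ G_sq(1)[OF k, of a] by simp
  note c = cond[OF JJ fm int2 bnd Bi]
  show "integrable M (\<lambda>\<omega>. Cup (G k i a (\<xi> (Orc k i) \<omega>)) (\<xi> (Up k i) \<omega>))"
    using c(1) oJ uJ unfolding f_def by simp
  have "(\<integral>\<omega>. Cup (G k i a (\<xi> (Orc k i) \<omega>)) (\<xi> (Up k i) \<omega>) \<partial>M) = (\<integral>\<omega>. f (rJ J \<omega>, rJ J' \<omega>) \<partial>M)"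
    using oJ uJ unfolding f_def by simp
  also have "\<dots> = (\<integral>\<omega>. (\<integral>\<omega>'. f (rJ J \<omega>, rJ J' \<omega>') \<partial>M) \<partial>M)" by (rule c(3))
  also have "\<dots> = (\<integral>\<omega>. G k i a (\<xi> (Orc k i) \<omega>) \<partial>M)"
    using oJ uJ A1_up_unb[OF k] unfolding f_def by simp
  also have "\<dots> = gradF a" by (rule A4_unb[OF k])
  finally show "(\<integral>\<omega>. Cup (G k i a (\<xi> (Orc k i) \<omega>)) (\<xi> (Up k i) \<omega>) \<partial>M) = gradF a" .
  define f2 where "f2 pq = (norm (f pq - gradF a))\<^sup>2" for pq
  have f2m: "f2 \<in> borel_measurable (PiM J (\<lambda>_. S) \<Otimes>\<^sub>M PiM J' (\<lambda>_. S))"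
    unfolding f2_def[abs_def] using fm by measurable
  define B2 where "B2 p = \<omega>up * (norm (G k i a (p (Orc k i))))\<^sup>2 + (norm (G k i a (p (Orc k i)) - gradF a))\<^sup>2"
    for p :: "noise_idx \<Rightarrow> 'b"
  have int22: "integrable M (\<lambda>\<omega>. f2 (p, rJ J' \<omega>))" for p
    unfolding f2_def f_def using uJ Cup_sq(1)[OF k] by simp
  have le2: "(\<integral>\<omega>. f2 (p, rJ J' \<omega>) \<partial>M) \<le> B2 p" for p
    unfolding f2_def f_def B2_def using uJ Cup_sq(2)[OF k] by simp
  have bnd2: "(\<integral>\<omega>. norm (f2 (p, rJ J' \<omega>)) \<partial>M) \<le> B2 p" for p
    using le2[of p] unfolding f2_def by simp
  have B2i: "integrable M (\<lambda>\<omega>. B2 (rJ J \<omega>))"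
    unfolding B2_def using oJ G_sq(1)[OF k, of a] A4_var_int[OF k, of a] by simp
  note c2 = cond[OF JJ f2m int22 bnd2 B2i]
  show "integrable M (\<lambda>\<omega>. (norm (Cup (G k i a (\<xi> (Orc k i) \<omega>)) (\<xi> (Up k i) \<omega>) - gradF a))\<^sup>2)"
    using c2(1) oJ uJ unfolding f2_def f_def by simp
  have "(\<integral>\<omega>. (norm (Cup (G k i a (\<xi> (Orc k i) \<omega>)) (\<xi> (Up k i) \<omega>) - gradF a))\<^sup>2 \<partial>M)
      = (\<integral>\<omega>. f2 (rJ J \<omega>, rJ J' \<omega>) \<partial>M)"
    using oJ uJ unfolding f2_def f_def by simp
  also have "\<dots> \<le> (\<integral>\<omega>. B2 (rJ J \<omega>) \<partial>M)"
    by (rule cond_le[OF JJ f2m int22 bnd2 B2i le2 B2i])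
  also have "\<dots> = \<omega>up * (\<integral>\<omega>. (norm (G k i a (\<xi> (Orc k i) \<omega>)))\<^sup>2 \<partial>M)
                   + (\<integral>\<omega>. (norm (G k i a (\<xi> (Orc k i) \<omega>) - gradF a))\<^sup>2 \<partial>M)"
    unfolding B2_def using oJ G_sq(1)[OF k, of a] A4_var_int[OF k, of a] by simp
  also have "\<dots> \<le> \<omega>up * (\<sigma>\<^sup>2 / real b + (norm (gradF a))\<^sup>2) + \<sigma>\<^sup>2 / real b"
    using G_sq(2)[OF k, of a] A4_var[OF k, of a] \<omega> by (intro add_mono mult_left_mono) auto
  also have "\<dots> = \<omega>up * (norm (gradF a))\<^sup>2 + (1 + \<omega>up) * (\<sigma>\<^sup>2 / real b)"
    by (simp add: algebra_simps add_divide_distrib)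
  finally show "(\<integral>\<omega>. (norm (Cup (G k i a (\<xi> (Orc k i) \<omega>)) (\<xi> (Up k i) \<omega>) - gradF a))\<^sup>2 \<partial>M)
           \<le> \<omega>up * (norm (gradF a))\<^sup>2 + (1 + \<omega>up) * (\<sigma>\<^sup>2 / real b)" .
qed

end


context gs
begin

lemma past_cond:
  assumes k: "k \<ge> 1" "m < N"
    and J: "J \<subseteq> used_idx N" "Orc k m \<notin> J" "Up k m \<notin> J"
    and hm[measurable]: "h \<in> borel_measurable (PiM J (\<lambda>_. S))"
    and hs: "sqi (\<lambda>\<omega>. h (rJ J \<omega>))"
    and \<phi>m[measurable]: "\<phi> \<in> borel_measurable (PiM J (\<lambda>_. S))"
    and \<phi>s: "sqi (\<lambda>\<omega>. \<phi> (rJ J \<omega>))"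
  shows "integrable M (\<lambda>\<omega>. \<phi> (rJ J \<omega>) \<bullet> (Cup (G k m (h (rJ J \<omega>)) (\<xi> (Orc k m) \<omega>)) (\<xi> (Up k m) \<omega>) - gradF (h (rJ J \<omega>))))"
    and "(\<integral>\<omega>. \<phi> (rJ J \<omega>) \<bullet> (Cup (G k m (h (rJ J \<omega>)) (\<xi> (Orc k m) \<omega>)) (\<xi> (Up k m) \<omega>) - gradF (h (rJ J \<omega>))) \<partial>M) = 0"
    and "integrable M (\<lambda>\<omega>. (norm (Cup (G k m (h (rJ J \<omega>)) (\<xi> (Orc k m) \<omega>)) (\<xi> (Up k m) \<omega>) - gradF (h (rJ J \<omega>))))\<^sup>2)"
    and "(\<integral>\<omega>. (norm (Cup (G k m (h (rJ J \<omega>)) (\<xi> (Orc k m) \<omega>)) (\<xi> (Up k m) \<omega>) - gradF (h (rJ J \<omega>))))\<^sup>2 \<partial>M)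
          \<le> \<omega>up * (\<integral>\<omega>. (norm (gradF (h (rJ J \<omega>))))\<^sup>2 \<partial>M) + (1 + \<omega>up) * (\<sigma>\<^sup>2 / real b)"
    and "(\<lambda>\<omega>. Cup (G k m (h (rJ J \<omega>)) (\<xi> (Orc k m) \<omega>)) (\<xi> (Up k m) \<omega>)) \<in> borel_measurable M"
proof -
  define J' where "J' = {Orc k m, Up k m}"
  have JJ: "J \<inter> J' = {}" "J \<subseteq> used_idx N" "J' \<subseteq> used_idx N"
    using Orc_used[OF k] Up_used[OF k] J by (auto simp: J'_def)
  have oJ: "Orc k m \<in> J'" and uJ: "Up k m \<in> J'" by (auto simp: J'_def)
  have gs: "sqi (\<lambda>\<omega>. gradF (h (rJ J \<omega>)))"
    by (rule sqi_compose_lip[OF hs gradF_lip]) (use A2_L in auto)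
  define Zf where "Zf pq = Cup (G k m (h (fst pq)) (snd pq (Orc k m))) (snd pq (Up k m))" for pq :: "(noise_idx \<Rightarrow> 'b) \<times> (noise_idx \<Rightarrow> 'b)"
  have Zfm[measurable]: "Zf \<in> borel_measurable (PiM J (\<lambda>_. S) \<Otimes>\<^sub>M PiM J' (\<lambda>_. S))"
    unfolding Zf_def[abs_def] using oJ uJ by measurable
  have Zfe: "Zf (rJ J \<omega>, rJ J' \<omega>) = Cup (G k m (h (rJ J \<omega>)) (\<xi> (Orc k m) \<omega>)) (\<xi> (Up k m) \<omega>)" for \<omega>
    unfolding Zf_def using oJ uJ by simp
  have Zfi: "Zf (p, rJ J' \<omega>) = Cup (G k m (h p) (\<xi> (Orc k m) \<omega>)) (\<xi> (Up k m) \<omega>)" for p \<omega>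
    unfolding Zf_def using oJ uJ by simp
  have pm: "(\<lambda>\<omega>. (rJ J \<omega>, rJ J' \<omega>)) \<in> measurable M (PiM J (\<lambda>_. S) \<Otimes>\<^sub>M PiM J' (\<lambda>_. S))"
    using JJ by measurable
  show "(\<lambda>\<omega>. Cup (G k m (h (rJ J \<omega>)) (\<xi> (Orc k m) \<omega>)) (\<xi> (Up k m) \<omega>)) \<in> borel_measurable M"
    using measurable_compose[OF pm Zfm] unfolding Zfe by simp
  define f where "f pq = \<phi> (fst pq) \<bullet> (Zf pq - gradF (h (fst pq)))" for pq
  have fm: "f \<in> borel_measurable (PiM J (\<lambda>_. S) \<Otimes>\<^sub>M PiM J' (\<lambda>_. S))"
    unfolding f_def[abs_def] by measurable
  define B where "B p = ((norm (\<phi> p))\<^sup>2 + (\<omega>up * (norm (gradF (h p)))\<^sup>2 + (1 + \<omega>up) * (\<sigma>\<^sup>2 / real b))) / 2" for p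
  have int2: "integrable M (\<lambda>\<omega>. f (p, rJ J' \<omega>))" for p
    unfolding f_def Zfi fst_conv using Z_props(1)[OF k]
    by (intro integrable_inner_right Bochner_Integration.integrable_diff) auto
  have inner0: "(\<integral>\<omega>. f (p, rJ J' \<omega>) \<partial>M) = 0" for p
  proof -
    have "(\<integral>\<omega>. f (p, rJ J' \<omega>) \<partial>M) = \<phi> p \<bullet> (\<integral>\<omega>. (Cup (G k m (h p) (\<xi> (Orc k m) \<omega>)) (\<xi> (Up k m) \<omega>) - gradF (h p)) \<partial>M)"
      unfolding f_def Zfi fst_conv using Z_props(1)[OF k]
      by (intro integral_inner_right) auto
    also have "(\<integral>\<omega>. (Cup (G k m (h p) (\<xi> (Orc k m) \<omega>)) (\<xi> (Up k m) \<omega>) - gradF (h p)) \<partial>M) = 0"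
      using Z_props(1,2)[OF k] by (subst Bochner_Integration.integral_diff) (auto simp: prob_space)
    finally show ?thesis by simp
  qed
  have bnd: "(\<integral>\<omega>. norm (f (p, rJ J' \<omega>)) \<partial>M) \<le> B p" for p
  proof -
    let ?Z = "\<lambda>\<omega>. Cup (G k m (h p) (\<xi> (Orc k m) \<omega>)) (\<xi> (Up k m) \<omega>) - gradF (h p)"
    have ai: "\<bar>x \<bullet> y\<bar> * 2 \<le> (norm x)\<^sup>2 + (norm y)\<^sup>2" for x y :: 'a
      using abs_inner_le[of x y] by simp
    have "(\<integral>\<omega>. norm (f (p, rJ J' \<omega>)) \<partial>M) \<le> (\<integral>\<omega>. ((norm (\<phi> p))\<^sup>2 + (norm (?Z \<omega>))\<^sup>2) / 2 \<partial>M)"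
      unfolding f_def Zfi fst_conv using int2[of p] Z_props(3)[OF k, of "h p"]
      by (intro Bochner_Integration.integral_mono) (auto simp: f_def Zfi intro!: ai)
    also have "\<dots> = ((norm (\<phi> p))\<^sup>2 + (\<integral>\<omega>. (norm (?Z \<omega>))\<^sup>2 \<partial>M)) / 2"
      using Z_props(3)[OF k, of "h p"] by (simp add: prob_space)
    also have "\<dots> \<le> B p"
    proof -
      have "(\<integral>\<omega>. (norm (?Z \<omega>))\<^sup>2 \<partial>M) \<le> \<omega>up * (norm (gradF (h p)))\<^sup>2 + (1 + \<omega>up) * (\<sigma>\<^sup>2 / real b)"
        by (rule Z_props(4)[OF k])
      then show ?thesis unfolding B_def by (intro divide_right_mono add_left_mono) auto
    qed
    finally show ?thesis .
  qed
  have Bi: "integrable M (\<lambda>\<omega>. B (rJ J \<omega>))"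
    unfolding B_def using sqi_int2[OF \<phi>s] sqi_int2[OF gs] by simp
  note c = cond[OF JJ fm int2 bnd Bi]
  show "integrable M (\<lambda>\<omega>. \<phi> (rJ J \<omega>) \<bullet> (Cup (G k m (h (rJ J \<omega>)) (\<xi> (Orc k m) \<omega>)) (\<xi> (Up k m) \<omega>) - gradF (h (rJ J \<omega>))))"
    using c(1) unfolding f_def Zfe fst_conv .
  show "(\<integral>\<omega>. \<phi> (rJ J \<omega>) \<bullet> (Cup (G k m (h (rJ J \<omega>)) (\<xi> (Orc k m) \<omega>)) (\<xi> (Up k m) \<omega>) - gradF (h (rJ J \<omega>))) \<partial>M) = 0"
    using c(3) unfolding f_def Zfe fst_conv using inner0[unfolded f_def fst_conv] by simp
  define f2 where "f2 pq = (norm (Zf pq - gradF (h (fst pq))))\<^sup>2" for pq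
  have f2m: "f2 \<in> borel_measurable (PiM J (\<lambda>_. S) \<Otimes>\<^sub>M PiM J' (\<lambda>_. S))"
    unfolding f2_def[abs_def] by measurable
  define B2 where "B2 p = \<omega>up * (norm (gradF (h p)))\<^sup>2 + (1 + \<omega>up) * (\<sigma>\<^sup>2 / real b)" for p
  have int22: "integrable M (\<lambda>\<omega>. f2 (p, rJ J' \<omega>))" for p
    unfolding f2_def Zfi fst_conv using Z_props(3)[OF k] .
  have le2: "(\<integral>\<omega>. f2 (p, rJ J' \<omega>) \<partial>M) \<le> B2 p" for p
    unfolding f2_def Zfi fst_conv B2_def using Z_props(4)[OF k] .
  have bnd2: "(\<integral>\<omega>. norm (f2 (p, rJ J' \<omega>)) \<partial>M) \<le> B2 p" for p
    using le2[of p] unfolding f2_def by simp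
  have B2i: "integrable M (\<lambda>\<omega>. B2 (rJ J \<omega>))"
    unfolding B2_def using sqi_int2[OF gs] by simp
  note c2 = cond[OF JJ f2m int22 bnd2 B2i]
  show "integrable M (\<lambda>\<omega>. (norm (Cup (G k m (h (rJ J \<omega>)) (\<xi> (Orc k m) \<omega>)) (\<xi> (Up k m) \<omega>) - gradF (h (rJ J \<omega>))))\<^sup>2)"
    using c2(1) unfolding f2_def Zfe fst_conv .
  have "(\<integral>\<omega>. (norm (Cup (G k m (h (rJ J \<omega>)) (\<xi> (Orc k m) \<omega>)) (\<xi> (Up k m) \<omega>) - gradF (h (rJ J \<omega>))))\<^sup>2 \<partial>M)
      = (\<integral>\<omega>. f2 (rJ J \<omega>, rJ J' \<omega>) \<partial>M)"
    unfolding f2_def Zfe fst_conv ..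
  also have "\<dots> \<le> (\<integral>\<omega>. B2 (rJ J \<omega>) \<partial>M)"
    by (rule cond_le[OF JJ f2m int22 bnd2 B2i le2 B2i])
  also have "\<dots> = \<omega>up * (\<integral>\<omega>. (norm (gradF (h (rJ J \<omega>))))\<^sup>2 \<partial>M) + (1 + \<omega>up) * (\<sigma>\<^sup>2 / real b)"
    unfolding B2_def using sqi_int2[OF gs] by (simp add: prob_space)
  finally show "(\<integral>\<omega>. (norm (Cup (G k m (h (rJ J \<omega>)) (\<xi> (Orc k m) \<omega>)) (\<xi> (Up k m) \<omega>) - gradF (h (rJ J \<omega>))))\<^sup>2 \<partial>M)
          \<le> \<omega>up * (\<integral>\<omega>. (norm (gradF (h (rJ J \<omega>))))\<^sup>2 \<partial>M) + (1 + \<omega>up) * (\<sigma>\<^sup>2 / real b)" .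
qed

lemma dw_cond:
  assumes k: "k \<ge> 1"
    and J: "J \<subseteq> used_idx N" "Dw k \<notin> J"
    and \<psi>m[measurable]: "\<psi> \<in> borel_measurable (PiM J (\<lambda>_. S))"
    and \<psi>s: "sqi (\<lambda>\<omega>. \<psi> (rJ J \<omega>))"
  shows "integrable M (\<lambda>\<omega>. (norm (Cdwn (\<psi> (rJ J \<omega>)) (\<xi> (Dw k) \<omega>) - \<psi> (rJ J \<omega>)))\<^sup>2)"
    and "(\<integral>\<omega>. (norm (Cdwn (\<psi> (rJ J \<omega>)) (\<xi> (Dw k) \<omega>) - \<psi> (rJ J \<omega>)))\<^sup>2 \<partial>M)
          \<le> \<omega>dwn * (\<integral>\<omega>. (norm (\<psi> (rJ J \<omega>)))\<^sup>2 \<partial>M)"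
    and "(\<lambda>\<omega>. Cdwn (\<psi> (rJ J \<omega>)) (\<xi> (Dw k) \<omega>)) \<in> borel_measurable M"
proof -
  define J' where "J' = {Dw k}"
  have JJ: "J \<inter> J' = {}" "J \<subseteq> used_idx N" "J' \<subseteq> used_idx N"
    using Dw_used[OF k] J by (auto simp: J'_def)
  have dJ: "Dw k \<in> J'" by (auto simp: J'_def)
  define Df where "Df pq = Cdwn (\<psi> (fst pq)) (snd pq (Dw k))" for pq :: "(noise_idx \<Rightarrow> 'b) \<times> (noise_idx \<Rightarrow> 'b)"
  have Dfm[measurable]: "Df \<in> borel_measurable (PiM J (\<lambda>_. S) \<Otimes>\<^sub>M PiM J' (\<lambda>_. S))"
    unfolding Df_def[abs_def] using dJ by measurable
  have Dfe: "Df (rJ J \<omega>, rJ J' \<omega>) = Cdwn (\<psi> (rJ J \<omega>)) (\<xi> (Dw k) \<omega>)" for \<omega>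
    unfolding Df_def using dJ by simp
  have Dfi: "Df (p, rJ J' \<omega>) = Cdwn (\<psi> p) (\<xi> (Dw k) \<omega>)" for p \<omega>
    unfolding Df_def using dJ by simp
  have pm: "(\<lambda>\<omega>. (rJ J \<omega>, rJ J' \<omega>)) \<in> measurable M (PiM J (\<lambda>_. S) \<Otimes>\<^sub>M PiM J' (\<lambda>_. S))"
    using JJ by measurable
  show "(\<lambda>\<omega>. Cdwn (\<psi> (rJ J \<omega>)) (\<xi> (Dw k) \<omega>)) \<in> borel_measurable M"
    using measurable_compose[OF pm Dfm] unfolding Dfe by simp
  define f2 where "f2 pq = (norm (Df pq - \<psi> (fst pq)))\<^sup>2" for pq
  have f2m: "f2 \<in> borel_measurable (PiM J (\<lambda>_. S) \<Otimes>\<^sub>M PiM J' (\<lambda>_. S))"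
    unfolding f2_def[abs_def] by measurable
  define B2 where "B2 p = \<omega>dwn * (norm (\<psi> p))\<^sup>2" for p
  have int22: "integrable M (\<lambda>\<omega>. f2 (p, rJ J' \<omega>))" for p
    unfolding f2_def Dfi fst_conv using A1_dw_var_int[OF k] .
  have le2: "(\<integral>\<omega>. f2 (p, rJ J' \<omega>) \<partial>M) \<le> B2 p" for p
    unfolding f2_def Dfi fst_conv B2_def using A1_dw_var[OF k] .
  have bnd2: "(\<integral>\<omega>. norm (f2 (p, rJ J' \<omega>)) \<partial>M) \<le> B2 p" for p
    using le2[of p] unfolding f2_def by simp
  have B2i: "integrable M (\<lambda>\<omega>. B2 (rJ J \<omega>))"
    unfolding B2_def using sqi_int2[OF \<psi>s] by simp
  note c2 = cond[OF JJ f2m int22 bnd2 B2i]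
  show "integrable M (\<lambda>\<omega>. (norm (Cdwn (\<psi> (rJ J \<omega>)) (\<xi> (Dw k) \<omega>) - \<psi> (rJ J \<omega>)))\<^sup>2)"
    using c2(1) unfolding f2_def Dfe fst_conv .
  have "(\<integral>\<omega>. (norm (Cdwn (\<psi> (rJ J \<omega>)) (\<xi> (Dw k) \<omega>) - \<psi> (rJ J \<omega>)))\<^sup>2 \<partial>M)
      = (\<integral>\<omega>. f2 (rJ J \<omega>, rJ J' \<omega>) \<partial>M)"
    unfolding f2_def Dfe fst_conv ..
  also have "\<dots> \<le> (\<integral>\<omega>. B2 (rJ J \<omega>) \<partial>M)"
    by (rule cond_le[OF JJ f2m int22 bnd2 B2i le2 B2i])
  also have "\<dots> = \<omega>dwn * (\<integral>\<omega>. (norm (\<psi> (rJ J \<omega>)))\<^sup>2 \<partial>M)"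
    unfolding B2_def by simp
  finally show "(\<integral>\<omega>. (norm (Cdwn (\<psi> (rJ J \<omega>)) (\<xi> (Dw k) \<omega>) - \<psi> (rJ J \<omega>)))\<^sup>2 \<partial>M)
          \<le> \<omega>dwn * (\<integral>\<omega>. (norm (\<psi> (rJ J \<omega>)))\<^sup>2 \<partial>M)" .
qed

definition xs :: "'m \<Rightarrow> noise_idx \<Rightarrow> 'b" where "xs \<omega> = (\<lambda>i. \<xi> i \<omega>)"

lemma gh_rJ: "past n \<subseteq> J \<Longrightarrow> gh n (rJ J \<omega>) = gh n (xs \<omega>)"
  by (rule gh_cong) (auto simp: xs_def)

lemma cc_rJ: "past n \<subseteq> J \<Longrightarrow> Orc (Suc n) i \<in> J \<Longrightarrow> Up (Suc n) i \<in> J \<Longrightarrow> cc n i (rJ J \<omega>) = cc n i (xs \<omega>)"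
  by (rule cc_cong) (auto simp: xs_def)

lemma vv_rJ: "past n \<subseteq> J \<Longrightarrow> wk (Suc n) N \<subseteq> J \<Longrightarrow> vv n (rJ J \<omega>) = vv n (xs \<omega>)"
  by (rule vv_cong) (auto simp: xs_def)

lemma cc_xs: "cc n i (xs \<omega>) = Cup (G (Suc n) i (snd (gh n (xs \<omega>))) (\<xi> (Orc (Suc n) i) \<omega>)) (\<xi> (Up (Suc n) i) \<omega>)"
  by (simp add: cc_def xs_def)

lemma Dw_notin_past: "Dw (Suc n) \<notin> past n" by (auto simp: past_def)
lemma Orc_notin_past: "Orc (Suc n) i \<notin> past n" by (auto simp: past_def)
lemma Up_notin_past: "Up (Suc n) i \<notin> past n" by (auto simp: past_def)

lemma gh_meas_M1[measurable]: "(\<lambda>\<omega>. fst (gh n (xs \<omega>))) \<in> borel_measurable M"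
proof -
  have "(\<lambda>\<omega>. fst (gh n (rJ (past n) \<omega>))) \<in> borel_measurable M"
    using measurable_compose[OF rJ_meas[OF past_used] gh_meas1[OF subset_refl]] by simp
  then show ?thesis by (simp add: gh_rJ)
qed

lemma gh_meas_M2[measurable]: "(\<lambda>\<omega>. snd (gh n (xs \<omega>))) \<in> borel_measurable M"
proof -
  have "(\<lambda>\<omega>. snd (gh n (rJ (past n) \<omega>))) \<in> borel_measurable M"
    using measurable_compose[OF rJ_meas[OF past_used] gh_meas2[OF subset_refl]] by simp
  then show ?thesis by (simp add: gh_rJ)
qed

end


lemma norm_add_sq_eq: "(norm (x + y :: 'v::real_inner))\<^sup>2 = (norm x)\<^sup>2 + 2 * (x \<bullet> y) + (norm y)\<^sup>2"
  using dot_norm[of x y] by simp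

context gs
begin

lemma step_C:
  assumes sW: "sqi (\<lambda>\<omega>. snd (gh n (xs \<omega>)))" and i: "i < N"
    and J: "past n \<subseteq> J" "J \<subseteq> used_idx N" "Orc (Suc n) i \<notin> J" "Up (Suc n) i \<notin> J"
    and \<phi>m[measurable]: "\<phi> \<in> borel_measurable (PiM J (\<lambda>_. S))"
    and \<phi>s: "sqi (\<lambda>\<omega>. \<phi> (rJ J \<omega>))"
  shows "integrable M (\<lambda>\<omega>. \<phi> (rJ J \<omega>) \<bullet> (cc n i (xs \<omega>) - gradF (snd (gh n (xs \<omega>)))))"
    and "(\<integral>\<omega>. \<phi> (rJ J \<omega>) \<bullet> (cc n i (xs \<omega>) - gradF (snd (gh n (xs \<omega>)))) \<partial>M) = 0"
    and "integrable M (\<lambda>\<omega>. (norm (cc n i (xs \<omega>) - gradF (snd (gh n (xs \<omega>)))))\<^sup>2)"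
    and "(\<integral>\<omega>. (norm (cc n i (xs \<omega>) - gradF (snd (gh n (xs \<omega>)))))\<^sup>2 \<partial>M)
          \<le> \<omega>up * (\<integral>\<omega>. (norm (gradF (snd (gh n (xs \<omega>)))))\<^sup>2 \<partial>M) + (1 + \<omega>up) * (\<sigma>\<^sup>2 / real b)"
    and "sqi (\<lambda>\<omega>. cc n i (xs \<omega>))"
proof -
  have k: "Suc n \<ge> 1" by simp
  have hm: "(\<lambda>p. snd (gh n p)) \<in> borel_measurable (PiM J (\<lambda>_. S))" using J(1) by measurable
  have hs: "sqi (\<lambda>\<omega>. snd (gh n (rJ J \<omega>)))" using sW by (simp add: gh_rJ[OF J(1)])
  note pc = past_cond[OF k i J(2,3,4) hm hs \<phi>m \<phi>s]
  note eqs = gh_rJ[OF J(1)] cc_xs[symmetric]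
  show "integrable M (\<lambda>\<omega>. \<phi> (rJ J \<omega>) \<bullet> (cc n i (xs \<omega>) - gradF (snd (gh n (xs \<omega>)))))"
    using pc(1) by (simp only: eqs)
  show "(\<integral>\<omega>. \<phi> (rJ J \<omega>) \<bullet> (cc n i (xs \<omega>) - gradF (snd (gh n (xs \<omega>)))) \<partial>M) = 0"
    using pc(2) by (simp only: eqs)
  show i3: "integrable M (\<lambda>\<omega>. (norm (cc n i (xs \<omega>) - gradF (snd (gh n (xs \<omega>)))))\<^sup>2)"
    using pc(3) by (simp only: eqs)
  show "(\<integral>\<omega>. (norm (cc n i (xs \<omega>) - gradF (snd (gh n (xs \<omega>)))))\<^sup>2 \<partial>M)
          \<le> \<omega>up * (\<integral>\<omega>. (norm (gradF (snd (gh n (xs \<omega>)))))\<^sup>2 \<partial>M) + (1 + \<omega>up) * (\<sigma>\<^sup>2 / real b)"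
    using pc(4) by (simp only: eqs)
  have cm: "(\<lambda>\<omega>. cc n i (xs \<omega>)) \<in> borel_measurable M"
    using pc(5) by (simp only: eqs)
  have gs: "sqi (\<lambda>\<omega>. gradF (snd (gh n (xs \<omega>))))"
    by (rule sqi_compose_lip[OF sW gradF_lip]) (use A2_L in auto)
  have "sqi (\<lambda>\<omega>. cc n i (xs \<omega>) - gradF (snd (gh n (xs \<omega>))))"
    using i3 by (intro sqiI borel_measurable_diff cm measurable_compose[OF gh_meas_M2 gradF_meas])
  from sqi_add[OF this gs] show "sqi (\<lambda>\<omega>. cc n i (xs \<omega>))" by simp
qed

lemma sum_meas_cc:
  assumes "past n \<subseteq> J" "wk (Suc n) m \<subseteq> J"
  shows "(\<lambda>p. \<Sum>i<m. (cc n i p - gradF (snd (gh n p)))) \<in> borel_measurable (PiM J (\<lambda>_. S))"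
proof -
  have "cc n i \<in> borel_measurable (PiM J (\<lambda>_. S))" if "i < m" for i
    using assms that by (intro cc_meas) (auto simp: wk_def)
  moreover have "(\<lambda>p. gradF (snd (gh n p))) \<in> borel_measurable (PiM J (\<lambda>_. S))"
    using assms(1) by measurable
  ultimately show ?thesis by (intro borel_measurable_sum borel_measurable_diff) auto
qed

lemma S_bound:
  assumes sW: "sqi (\<lambda>\<omega>. snd (gh n (xs \<omega>)))"
  shows "m \<le> N \<Longrightarrow> sqi (\<lambda>\<omega>. \<Sum>i<m. (cc n i (xs \<omega>) - gradF (snd (gh n (xs \<omega>))))) \<and>
     (\<integral>\<omega>. (norm (\<Sum>i<m. (cc n i (xs \<omega>) - gradF (snd (gh n (xs \<omega>))))))\<^sup>2 \<partial>M)
       \<le> real m * (\<omega>up * (\<integral>\<omega>. (norm (gradF (snd (gh n (xs \<omega>)))))\<^sup>2 \<partial>M) + (1 + \<omega>up) * (\<sigma>\<^sup>2 / real b))"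
proof (induction m)
  case 0 then show ?case by (simp add: sqi_const)
next
  case (Suc m)
  let ?g = "\<lambda>\<omega>. gradF (snd (gh n (xs \<omega>)))"
  let ?S = "\<lambda>\<omega>. \<Sum>i<m. (cc n i (xs \<omega>) - ?g \<omega>)"
  let ?D = "\<lambda>\<omega>. cc n m (xs \<omega>) - ?g \<omega>"
  let ?Q = "\<omega>up * (\<integral>\<omega>. (norm (?g \<omega>))\<^sup>2 \<partial>M) + (1 + \<omega>up) * (\<sigma>\<^sup>2 / real b)"
  have mN: "m < N" using Suc.prems by simp
  have IH: "sqi ?S" "(\<integral>\<omega>. (norm (?S \<omega>))\<^sup>2 \<partial>M) \<le> real m * ?Q" using Suc.IH mN by auto
  define J where "J = past n \<union> wk (Suc n) m"
  have J: "past n \<subseteq> J" "J \<subseteq> used_idx N" "Orc (Suc n) m \<notin> J" "Up (Suc n) m \<notin> J"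
    using past_used wk_used[of "Suc n" m] mN Orc_notin_past Up_notin_past
    by (auto simp: J_def wk_def)
  define \<phi> where "\<phi> p = (\<Sum>i<m. (cc n i p - gradF (snd (gh n p))))" for p
  have \<phi>m: "\<phi> \<in> borel_measurable (PiM J (\<lambda>_. S))"
    unfolding \<phi>_def[abs_def] by (rule sum_meas_cc) (auto simp: J_def)
  have \<phi>e: "\<phi> (rJ J \<omega>) = ?S \<omega>" for \<omega>
    unfolding \<phi>_def
  proof (intro sum.cong refl)
    fix i assume "i \<in> {..<m}"
    then have "Orc (Suc n) i \<in> J" "Up (Suc n) i \<in> J" by (auto simp: J_def wk_def)
    then show "cc n i (rJ J \<omega>) - gradF (snd (gh n (rJ J \<omega>))) = cc n i (xs \<omega>) - ?g \<omega>"
      using J(1) by (simp add: cc_rJ gh_rJ)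
  qed
  have \<phi>s: "sqi (\<lambda>\<omega>. \<phi> (rJ J \<omega>))" unfolding \<phi>e using IH(1) .
  note sc = step_C[OF sW mN J \<phi>m \<phi>s, unfolded \<phi>e]
  have Ds: "sqi ?D" using sqi_diff[OF sc(5) sqi_compose_lip[OF sW gradF_lip]] A2_L by simp
  have eq: "(norm (?S \<omega> + ?D \<omega>))\<^sup>2 = (norm (?S \<omega>))\<^sup>2 + 2 * (?S \<omega> \<bullet> ?D \<omega>) + (norm (?D \<omega>))\<^sup>2" for \<omega>
    by (rule norm_add_sq_eq)
  have sumS: "(\<Sum>i<Suc m. (cc n i (xs \<omega>) - ?g \<omega>)) = ?S \<omega> + ?D \<omega>" for \<omega> by simp
  have "sqi (\<lambda>\<omega>. ?S \<omega> + ?D \<omega>)" by (rule sqi_add[OF IH(1) Ds])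
  moreover have "(\<integral>\<omega>. (norm (?S \<omega> + ?D \<omega>))\<^sup>2 \<partial>M) \<le> real (Suc m) * ?Q"
  proof -
    have "(\<integral>\<omega>. (norm (?S \<omega> + ?D \<omega>))\<^sup>2 \<partial>M)
        = (\<integral>\<omega>. (norm (?S \<omega>))\<^sup>2 \<partial>M) + 2 * (\<integral>\<omega>. ?S \<omega> \<bullet> ?D \<omega> \<partial>M) + (\<integral>\<omega>. (norm (?D \<omega>))\<^sup>2 \<partial>M)"
      unfolding eq using sqi_int2[OF IH(1)] sc(1) sc(3) by simp
    also have "\<dots> \<le> real m * ?Q + 2 * 0 + ?Q"
      using IH(2) sc(2) sc(4) by (intro add_mono) auto
    also have "\<dots> = real (Suc m) * ?Q" by (simp add: algebra_simps add_divide_distrib)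
    finally show ?thesis .
  qed
  ultimately show ?case unfolding sumS by simp
qed

lemma vv_decomp: "vv n p = gradF (snd (gh n p)) + (1 / real N) *\<^sub>R (\<Sum>i<N. (cc n i p - gradF (snd (gh n p))))"
proof -
  have N0: "real N \<noteq> 0" using N by simp
  have "(\<Sum>i<N. (cc n i p - gradF (snd (gh n p)))) = (\<Sum>i<N. cc n i p) - real N *\<^sub>R gradF (snd (gh n p))"
    by (simp add: sum_subtractf sum_constant_scaleR)
  then have "(1 / real N) *\<^sub>R (\<Sum>i<N. (cc n i p - gradF (snd (gh n p)))) = vv n p - gradF (snd (gh n p))"
    unfolding vv_def using N0 by (simp add: scaleR_diff_right)
  then show ?thesis by simp
qed

lemma step_V:
  assumes sW1: "sqi (\<lambda>\<omega>. fst (gh n (xs \<omega>)))" and sW: "sqi (\<lambda>\<omega>. snd (gh n (xs \<omega>)))"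
  shows "sqi (\<lambda>\<omega>. vv n (xs \<omega>))"
    and "(\<integral>\<omega>. (norm (vv n (xs \<omega>)))\<^sup>2 \<partial>M) \<le> (1 + \<omega>up / real N) * (\<integral>\<omega>. (norm (gradF (snd (gh n (xs \<omega>)))))\<^sup>2 \<partial>M)
            + (1 + \<omega>up) * \<sigma>\<^sup>2 / (real N * real b)"
    and "integrable M (\<lambda>\<omega>. vv n (xs \<omega>) \<bullet> (fst (gh n (xs \<omega>)) - wstar))"
    and "(\<integral>\<omega>. vv n (xs \<omega>) \<bullet> (fst (gh n (xs \<omega>)) - wstar) \<partial>M)
         = (\<integral>\<omega>. gradF (snd (gh n (xs \<omega>))) \<bullet> (fst (gh n (xs \<omega>)) - wstar) \<partial>M)"
proof -
  let ?g = "\<lambda>\<omega>. gradF (snd (gh n (xs \<omega>)))"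
  let ?S = "\<lambda>\<omega>. \<Sum>i<N. (cc n i (xs \<omega>) - ?g \<omega>)"
  let ?u = "\<lambda>\<omega>. fst (gh n (xs \<omega>)) - wstar"
  have N0: "real N > 0" using N by simp
  have gs: "sqi ?g" by (rule sqi_compose_lip[OF sW gradF_lip]) (use A2_L in auto)
  have us: "sqi ?u" by (rule sqi_diff[OF sW1 sqi_const])
  note SB = S_bound[OF sW, of N, simplified]
  have Ve: "vv n (xs \<omega>) = ?g \<omega> + (1 / real N) *\<^sub>R ?S \<omega>" for \<omega> by (rule vv_decomp)
  show Vs: "sqi (\<lambda>\<omega>. vv n (xs \<omega>))" unfolding Ve by (intro sqi_add gs sqi_scaleR SB[THEN conjunct1])
  have orth: "integrable M (\<lambda>\<omega>. \<phi> (rJ (past n) \<omega>) \<bullet> ?S \<omega>) \<and> (\<integral>\<omega>. \<phi> (rJ (past n) \<omega>) \<bullet> ?S \<omega> \<partial>M) = 0"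
    if \<phi>m: "\<phi> \<in> borel_measurable (PiM (past n) (\<lambda>_. S))" and \<phi>s: "sqi (\<lambda>\<omega>. \<phi> (rJ (past n) \<omega>))" for \<phi>
  proof -
    have J: "past n \<subseteq> past n" "past n \<subseteq> used_idx N" "Orc (Suc n) i \<notin> past n" "Up (Suc n) i \<notin> past n" for i
      using past_used Orc_notin_past Up_notin_past by auto
    note sc = step_C[OF sW _ J \<phi>m \<phi>s]
    have e: "\<phi> (rJ (past n) \<omega>) \<bullet> ?S \<omega> = (\<Sum>i<N. \<phi> (rJ (past n) \<omega>) \<bullet> (cc n i (xs \<omega>) - ?g \<omega>))" for \<omega>
      by (simp add: inner_sum_right)
    show ?thesis unfolding e using sc(1,2)
      by (auto intro!: Bochner_Integration.integrable_sum simp: Bochner_Integration.integral_sum)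
  qed
  have o1: "integrable M (\<lambda>\<omega>. ?g \<omega> \<bullet> ?S \<omega>) \<and> (\<integral>\<omega>. ?g \<omega> \<bullet> ?S \<omega> \<partial>M) = 0"
  proof -
    have m: "(\<lambda>p. gradF (snd (gh n p))) \<in> borel_measurable (PiM (past n) (\<lambda>_. S))" by measurable
    have s: "sqi (\<lambda>\<omega>. gradF (snd (gh n (rJ (past n) \<omega>))))" using gs by (simp add: gh_rJ)
    show ?thesis using orth[OF m s] by (simp add: gh_rJ)
  qed
  have o2: "integrable M (\<lambda>\<omega>. ?u \<omega> \<bullet> ?S \<omega>) \<and> (\<integral>\<omega>. ?u \<omega> \<bullet> ?S \<omega> \<partial>M) = 0"
  proof -
    have m: "(\<lambda>p. fst (gh n p) - wstar) \<in> borel_measurable (PiM (past n) (\<lambda>_. S))" by measurable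
    have s: "sqi (\<lambda>\<omega>. fst (gh n (rJ (past n) \<omega>)) - wstar)" using us by (simp add: gh_rJ)
    show ?thesis using orth[OF m s] by (simp add: gh_rJ)
  qed
  have nrm: "(norm (vv n (xs \<omega>)))\<^sup>2 = (norm (?g \<omega>))\<^sup>2 + (2 / real N) * (?g \<omega> \<bullet> ?S \<omega>) + (1 / (real N)\<^sup>2) * (norm (?S \<omega>))\<^sup>2" for \<omega>
    unfolding Ve norm_add_sq_eq by (simp add: power_mult_distrib power_divide)
  have "(\<integral>\<omega>. (norm (vv n (xs \<omega>)))\<^sup>2 \<partial>M)
      = (\<integral>\<omega>. (norm (?g \<omega>))\<^sup>2 \<partial>M) + (2 / real N) * (\<integral>\<omega>. ?g \<omega> \<bullet> ?S \<omega> \<partial>M)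
        + (1 / (real N)\<^sup>2) * (\<integral>\<omega>. (norm (?S \<omega>))\<^sup>2 \<partial>M)"
    unfolding nrm using sqi_int2[OF gs] o1 sqi_int2[OF SB[THEN conjunct1]] by simp
  also have "\<dots> \<le> (\<integral>\<omega>. (norm (?g \<omega>))\<^sup>2 \<partial>M) + (2 / real N) * 0
        + (1 / (real N)\<^sup>2) * (real N * (\<omega>up * (\<integral>\<omega>. (norm (?g \<omega>))\<^sup>2 \<partial>M) + (1 + \<omega>up) * (\<sigma>\<^sup>2 / real b)))"
    using o1 SB[THEN conjunct2] by (intro add_mono mult_left_mono) auto
  also have "\<dots> = (1 + \<omega>up / real N) * (\<integral>\<omega>. (norm (?g \<omega>))\<^sup>2 \<partial>M) + (1 + \<omega>up) * \<sigma>\<^sup>2 / (real N * real b)"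
    using N0 by (cases "b = 0") (simp_all add: field_simps power2_eq_square)
  finally show "(\<integral>\<omega>. (norm (vv n (xs \<omega>)))\<^sup>2 \<partial>M) \<le> (1 + \<omega>up / real N) * (\<integral>\<omega>. (norm (?g \<omega>))\<^sup>2 \<partial>M)
            + (1 + \<omega>up) * \<sigma>\<^sup>2 / (real N * real b)" .
  have ip: "vv n (xs \<omega>) \<bullet> ?u \<omega> = ?g \<omega> \<bullet> ?u \<omega> + (1 / real N) * (?u \<omega> \<bullet> ?S \<omega>)" for \<omega>
    unfolding Ve inner_add_left inner_scaleR_left by (simp add: inner_commute)
  have gu: "integrable M (\<lambda>\<omega>. ?g \<omega> \<bullet> ?u \<omega>)" by (rule sqi_inner[OF gs us])
  show "integrable M (\<lambda>\<omega>. vv n (xs \<omega>) \<bullet> (fst (gh n (xs \<omega>)) - wstar))"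
    unfolding ip using gu o2 by simp
  show "(\<integral>\<omega>. vv n (xs \<omega>) \<bullet> (fst (gh n (xs \<omega>)) - wstar) \<partial>M) = (\<integral>\<omega>. ?g \<omega> \<bullet> ?u \<omega> \<partial>M)"
    unfolding ip using gu o2 by simp
qed

lemma step_next:
  assumes sW1: "sqi (\<lambda>\<omega>. fst (gh n (xs \<omega>)))" and sW: "sqi (\<lambda>\<omega>. snd (gh n (xs \<omega>)))"
  shows "sqi (\<lambda>\<omega>. fst (gh (Suc n) (xs \<omega>)))"
    and "sqi (\<lambda>\<omega>. snd (gh (Suc n) (xs \<omega>)))"
    and "(\<integral>\<omega>. (norm (fst (gh (Suc n) (xs \<omega>)) - snd (gh (Suc n) (xs \<omega>))))\<^sup>2 \<partial>M)
          \<le> \<gamma>\<^sup>2 * \<omega>dwn * (\<integral>\<omega>. (norm (vv n (xs \<omega>)))\<^sup>2 \<partial>M)"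
proof -
  note sv = step_V[OF sW1 sW]
  define J where "J = past n \<union> wk (Suc n) N"
  have J: "J \<subseteq> used_idx N" "Dw (Suc n) \<notin> J" "past n \<subseteq> J" "wk (Suc n) N \<subseteq> J"
    using past_used wk_used[of "Suc n" N] Dw_notin_past by (auto simp: J_def wk_def)
  have vm: "vv n \<in> borel_measurable (PiM J (\<lambda>_. S))" using J(3,4) by (rule vv_meas)
  have ve: "vv n (rJ J \<omega>) = vv n (xs \<omega>)" for \<omega> using J(3,4) by (rule vv_rJ)
  have vs: "sqi (\<lambda>\<omega>. vv n (rJ J \<omega>))" unfolding ve by (rule sv(1))
  note dc = dw_cond[of "Suc n", OF _ J(1,2) vm vs, unfolded ve, simplified]
  have xsD: "xs \<omega> (Dw (Suc n)) = \<xi> (Dw (Suc n)) \<omega>" for \<omega> by (simp add: xs_def)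
  have e1: "fst (gh (Suc n) (xs \<omega>)) = fst (gh n (xs \<omega>)) - \<gamma> *\<^sub>R vv n (xs \<omega>)" for \<omega>
    by (simp add: gh_Suc)
  have e2: "snd (gh (Suc n) (xs \<omega>)) = fst (gh n (xs \<omega>)) - \<gamma> *\<^sub>R Cdwn (vv n (xs \<omega>)) (\<xi> (Dw (Suc n)) \<omega>)" for \<omega>
    by (simp add: gh_Suc xsD)
  show "sqi (\<lambda>\<omega>. fst (gh (Suc n) (xs \<omega>)))" unfolding e1
    by (intro sqi_diff sW1 sqi_scaleR sv(1))
  have cs: "sqi (\<lambda>\<omega>. Cdwn (vv n (xs \<omega>)) (\<xi> (Dw (Suc n)) \<omega>) - vv n (xs \<omega>))"
    using dc(1,3) sqi_meas[OF sv(1)] by (intro sqiI borel_measurable_diff)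
  have cs2: "sqi (\<lambda>\<omega>. Cdwn (vv n (xs \<omega>)) (\<xi> (Dw (Suc n)) \<omega>))"
    using sqi_add[OF cs sv(1)] by simp
  show "sqi (\<lambda>\<omega>. snd (gh (Suc n) (xs \<omega>)))" unfolding e2
    by (intro sqi_diff sW1 sqi_scaleR cs2)
  have e3: "(norm (fst (gh (Suc n) (xs \<omega>)) - snd (gh (Suc n) (xs \<omega>))))\<^sup>2
      = \<gamma>\<^sup>2 * (norm (Cdwn (vv n (xs \<omega>)) (\<xi> (Dw (Suc n)) \<omega>) - vv n (xs \<omega>)))\<^sup>2" for \<omega>
  proof -
    have "fst (gh (Suc n) (xs \<omega>)) - snd (gh (Suc n) (xs \<omega>))
        = \<gamma> *\<^sub>R (Cdwn (vv n (xs \<omega>)) (\<xi> (Dw (Suc n)) \<omega>) - vv n (xs \<omega>))"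
      unfolding e1 e2 by (simp add: algebra_simps)
    then show ?thesis using \<gamma> by (simp add: power_mult_distrib)
  qed
  show "(\<integral>\<omega>. (norm (fst (gh (Suc n) (xs \<omega>)) - snd (gh (Suc n) (xs \<omega>))))\<^sup>2 \<partial>M)
          \<le> \<gamma>\<^sup>2 * \<omega>dwn * (\<integral>\<omega>. (norm (vv n (xs \<omega>)))\<^sup>2 \<partial>M)"
    unfolding e3 using mult_left_mono[OF dc(2), of "\<gamma>\<^sup>2"] by (simp add: mult.assoc)
qed

lemma sqi_all: "sqi (\<lambda>\<omega>. fst (gh n (xs \<omega>))) \<and> sqi (\<lambda>\<omega>. snd (gh n (xs \<omega>)))"
proof (induction n)
  case 0 then show ?case by (simp add: gh_0 sqi_const)
next
  case (Suc n) then show ?case using step_next(1,2) by blast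
qed

lemma sqi_F: "sqi X \<Longrightarrow> integrable M (\<lambda>\<omega>. F (X \<omega>))"
proof -
  assume X: "sqi X"
  let ?B = "\<lambda>\<omega>. \<bar>F wstar\<bar> + \<bar>F 0\<bar> + (norm (gradF 0))\<^sup>2 + (norm (X \<omega>))\<^sup>2 + L * (norm (X \<omega>))\<^sup>2"
  show ?thesis
  proof (rule Bochner_Integration.integrable_bound)
    show "integrable M ?B" using sqi_int2[OF X] by simp
    show "(\<lambda>\<omega>. F (X \<omega>)) \<in> borel_measurable M"
      using measurable_compose[OF sqi_meas[OF X] F_meas] by simp
    show "AE x in M. norm (F (X x)) \<le> norm (?B x)"
    proof (rule AE_I2)
      fix x
      have up: "F (X x) \<le> F 0 + gradF 0 \<bullet> (X x - 0) + L / 2 * (norm (X x - 0))\<^sup>2"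
        by (rule descent[OF A2_grad A2_smooth])
      have ab: "\<bar>gradF 0 \<bullet> X x\<bar> \<le> ((norm (gradF 0))\<^sup>2 + (norm (X x))\<^sup>2) / 2" by (rule abs_inner_le)
      have lo: "F wstar \<le> F (X x)" by (rule wstar)
      have r: "0 \<le> L * (norm (X x))\<^sup>2" using A2_L by simp
      have aux: "\<bar>f\<bar> \<le> \<bar>fs\<bar> + \<bar>f0\<bar> + P + Q + R"
        if "f \<le> f0 + a + R / 2" "\<bar>a\<bar> \<le> (P + Q) / 2" "fs \<le> f" "0 \<le> R" "0 \<le> P" "0 \<le> Q"
        for f f0 fs a P Q R :: real
        using that by (simp add: abs_le_iff field_simps) linarith
      have "\<bar>F (X x)\<bar> \<le> ?B x"
        by (rule aux) (use up ab lo r in auto)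
      moreover have "0 \<le> ?B x" using A2_L by simp
      ultimately show "norm (F (X x)) \<le> norm (?B x)" by simp
    qed
  qed
qed

end


context gs
begin

lemma ghost_xs: "ghost N \<gamma> G Cup Cdwn \<xi> w0 j \<omega> = gh j (xs \<omega>)"
  by (induction j) (simp_all add: gh_def xs_def Let_def)

lemma main_ineq:
  shows "(\<integral>\<omega>. (norm (fst (gh (Suc n) (xs \<omega>)) - wstar))\<^sup>2 \<partial>M)
     \<le> (\<integral>\<omega>. (norm (fst (gh n (xs \<omega>)) - wstar))\<^sup>2 \<partial>M)
       - \<gamma> * (\<integral>\<omega>. (F (fst (gh n (xs \<omega>))) - F wstar) \<partial>M)
       - \<gamma> / (2 * L) * (\<integral>\<omega>. (norm (gradF (snd (gh n (xs \<omega>)))))\<^sup>2 \<partial>M)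
       + 2 * \<gamma> ^ 3 * \<omega>dwn * L * (1 + \<omega>up / real N)
           * (if n = 0 then 0 else (\<integral>\<omega>. (norm (gradF (snd (gh (n - 1) (xs \<omega>)))))\<^sup>2 \<partial>M))
       + \<gamma>\<^sup>2 * ((1 + \<omega>up) * \<sigma>\<^sup>2 / (real N * real b)) * (1 + 2 * \<gamma> * L * \<omega>dwn)"
proof -
  define W where "W \<omega> = fst (gh n (xs \<omega>))" for \<omega>
  define Wh where "Wh \<omega> = snd (gh n (xs \<omega>))" for \<omega>
  define V where "V \<omega> = vv n (xs \<omega>)" for \<omega>
  define u where "u \<omega> = W \<omega> - wstar" for \<omega>
  define g where "g \<omega> = gradF (Wh \<omega>)" for \<omega>
  define c where "c = 1 + \<omega>up / real N"
  define st where "st = (1 + \<omega>up) * \<sigma>\<^sup>2 / (real N * real b)"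
  have st0: "st \<ge> 0" unfolding st_def using \<omega> by simp
  have c0: "c \<ge> 0" unfolding c_def using \<omega> by simp
  have sW1: "sqi W" and sW: "sqi Wh" using sqi_all[of n] unfolding W_def[abs_def] Wh_def[abs_def] by auto
  note sv = step_V[OF sqi_all[of n, THEN conjunct1] sqi_all[of n, THEN conjunct2], folded W_def Wh_def V_def u_def g_def c_def]
  have us: "sqi u" unfolding u_def[abs_def] by (rule sqi_diff[OF sW1 sqi_const])
  have gs: "sqi g" unfolding g_def[abs_def] by (rule sqi_compose_lip[OF sW gradF_lip]) (use A2_L in auto)
  have ds: "sqi (\<lambda>\<omega>. W \<omega> - Wh \<omega>)" by (rule sqi_diff[OF sW1 sW])
  have Fi: "integrable M (\<lambda>\<omega>. F (W \<omega>))" by (rule sqi_F[OF sW1])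
  have next1: "fst (gh (Suc n) (xs \<omega>)) - wstar = u \<omega> + (- \<gamma>) *\<^sub>R V \<omega>" for \<omega>
    by (simp add: gh_Suc u_def W_def V_def algebra_simps)
  have ex: "(norm (fst (gh (Suc n) (xs \<omega>)) - wstar))\<^sup>2 = (norm (u \<omega>))\<^sup>2 - 2 * \<gamma> * (V \<omega> \<bullet> u \<omega>) + \<gamma>\<^sup>2 * (norm (V \<omega>))\<^sup>2" for \<omega>
    unfolding next1 norm_add_sq_eq by (simp add: inner_commute power_mult_distrib)
  have "(\<integral>\<omega>. (norm (fst (gh (Suc n) (xs \<omega>)) - wstar))\<^sup>2 \<partial>M)
      = (\<integral>\<omega>. (norm (u \<omega>))\<^sup>2 \<partial>M) - 2 * \<gamma> * (\<integral>\<omega>. V \<omega> \<bullet> u \<omega> \<partial>M) + \<gamma>\<^sup>2 * (\<integral>\<omega>. (norm (V \<omega>))\<^sup>2 \<partial>M)"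
    unfolding ex using sqi_int2[OF us] sv(3) sqi_int2[OF sv(1)] by simp
  also have "\<dots> = (\<integral>\<omega>. (norm (u \<omega>))\<^sup>2 \<partial>M) - 2 * \<gamma> * (\<integral>\<omega>. g \<omega> \<bullet> u \<omega> \<partial>M) + \<gamma>\<^sup>2 * (\<integral>\<omega>. (norm (V \<omega>))\<^sup>2 \<partial>M)"
    using sv(4) by simp
  also have "\<dots> \<le> (\<integral>\<omega>. (norm (u \<omega>))\<^sup>2 \<partial>M) - 2 * \<gamma> * (\<integral>\<omega>. g \<omega> \<bullet> u \<omega> \<partial>M) + \<gamma>\<^sup>2 * (c * (\<integral>\<omega>. (norm (g \<omega>))\<^sup>2 \<partial>M) + st)"
    using sv(2) unfolding st_def by (intro add_left_mono mult_left_mono) auto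
  also have "\<dots> = (\<integral>\<omega>. (norm (u \<omega>))\<^sup>2 \<partial>M) + (\<integral>\<omega>. (- 2 * \<gamma> * (g \<omega> \<bullet> u \<omega>) + \<gamma>\<^sup>2 * c * (norm (g \<omega>))\<^sup>2) \<partial>M) + \<gamma>\<^sup>2 * st"
    using sqi_inner[OF gs us] sqi_int2[OF gs] by (simp add: algebra_simps)
  also have "\<dots> \<le> (\<integral>\<omega>. (norm (u \<omega>))\<^sup>2 \<partial>M)
       + (\<integral>\<omega>. (- \<gamma> * (F (W \<omega>) - F wstar) - \<gamma> / (2 * L) * (norm (g \<omega>))\<^sup>2 + \<gamma> * L * (norm (W \<omega> - Wh \<omega>))\<^sup>2) \<partial>M)
       + \<gamma>\<^sup>2 * st"
  proof -
    have "(\<integral>\<omega>. (- 2 * \<gamma> * (g \<omega> \<bullet> u \<omega>) + \<gamma>\<^sup>2 * c * (norm (g \<omega>))\<^sup>2) \<partial>M)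
        \<le> (\<integral>\<omega>. (- \<gamma> * (F (W \<omega>) - F wstar) - \<gamma> / (2 * L) * (norm (g \<omega>))\<^sup>2 + \<gamma> * L * (norm (W \<omega> - Wh \<omega>))\<^sup>2) \<partial>M)"
    proof (rule Bochner_Integration.integral_mono)
      show "integrable M (\<lambda>\<omega>. - 2 * \<gamma> * (g \<omega> \<bullet> u \<omega>) + \<gamma>\<^sup>2 * c * (norm (g \<omega>))\<^sup>2)"
        using sqi_inner[OF gs us] sqi_int2[OF gs] by simp
      show "integrable M (\<lambda>\<omega>. - \<gamma> * (F (W \<omega>) - F wstar) - \<gamma> / (2 * L) * (norm (g \<omega>))\<^sup>2 + \<gamma> * L * (norm (W \<omega> - Wh \<omega>))\<^sup>2)"
        using Fi sqi_int2[OF gs] sqi_int2[OF ds] by simp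
      fix \<omega>
      show "- 2 * \<gamma> * (g \<omega> \<bullet> u \<omega>) + \<gamma>\<^sup>2 * c * (norm (g \<omega>))\<^sup>2
          \<le> - \<gamma> * (F (W \<omega>) - F wstar) - \<gamma> / (2 * L) * (norm (g \<omega>))\<^sup>2 + \<gamma> * L * (norm (W \<omega> - Wh \<omega>))\<^sup>2"
        unfolding g_def u_def
        by (rule pointwise_key[OF A2_grad A2_smooth A2_L A3 wstar \<gamma>]) (use step in \<open>simp add: c_def\<close>)
    qed
    then show ?thesis by simp
  qed
  also have "\<dots> = (\<integral>\<omega>. (norm (u \<omega>))\<^sup>2 \<partial>M) - \<gamma> * (\<integral>\<omega>. (F (W \<omega>) - F wstar) \<partial>M)
       - \<gamma> / (2 * L) * (\<integral>\<omega>. (norm (g \<omega>))\<^sup>2 \<partial>M) + \<gamma> * L * (\<integral>\<omega>. (norm (W \<omega> - Wh \<omega>))\<^sup>2 \<partial>M) + \<gamma>\<^sup>2 * st"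
    using Fi sqi_int2[OF gs] sqi_int2[OF ds] by (simp add: algebra_simps)
  also have "\<dots> \<le> (\<integral>\<omega>. (norm (u \<omega>))\<^sup>2 \<partial>M) - \<gamma> * (\<integral>\<omega>. (F (W \<omega>) - F wstar) \<partial>M)
       - \<gamma> / (2 * L) * (\<integral>\<omega>. (norm (g \<omega>))\<^sup>2 \<partial>M)
       + 2 * \<gamma> ^ 3 * \<omega>dwn * L * c * (if n = 0 then 0 else (\<integral>\<omega>. (norm (gradF (snd (gh (n - 1) (xs \<omega>)))))\<^sup>2 \<partial>M))
       + \<gamma>\<^sup>2 * st * (1 + 2 * \<gamma> * L * \<omega>dwn)"
  proof -
    have key: "\<gamma> * L * (\<integral>\<omega>. (norm (W \<omega> - Wh \<omega>))\<^sup>2 \<partial>M) + \<gamma>\<^sup>2 * st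
        \<le> 2 * \<gamma> ^ 3 * \<omega>dwn * L * c * (if n = 0 then 0 else (\<integral>\<omega>. (norm (gradF (snd (gh (n - 1) (xs \<omega>)))))\<^sup>2 \<partial>M))
          + \<gamma>\<^sup>2 * st * (1 + 2 * \<gamma> * L * \<omega>dwn)"
    proof (cases n)
      case 0
      then have "W \<omega> - Wh \<omega> = 0" for \<omega> by (simp add: W_def Wh_def gh_0)
      then show ?thesis using 0 st0 \<gamma> A2_L \<omega> by (simp add: algebra_simps)
    next
      case (Suc n')
      let ?g' = "(\<integral>\<omega>. (norm (gradF (snd (gh n' (xs \<omega>)))))\<^sup>2 \<partial>M)"
      have g'0: "?g' \<ge> 0" by simp
      have d1: "(\<integral>\<omega>. (norm (W \<omega> - Wh \<omega>))\<^sup>2 \<partial>M) \<le> \<gamma>\<^sup>2 * \<omega>dwn * (\<integral>\<omega>. (norm (vv n' (xs \<omega>)))\<^sup>2 \<partial>M)"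
        using step_next(3)[OF sqi_all[of n', THEN conjunct1] sqi_all[of n', THEN conjunct2]]
        unfolding W_def Wh_def Suc by simp
      have d2: "(\<integral>\<omega>. (norm (vv n' (xs \<omega>)))\<^sup>2 \<partial>M) \<le> c * ?g' + st"
        using step_V(2)[OF sqi_all[of n', THEN conjunct1] sqi_all[of n', THEN conjunct2]]
        unfolding c_def st_def by simp
      have "\<gamma> * L * (\<integral>\<omega>. (norm (W \<omega> - Wh \<omega>))\<^sup>2 \<partial>M) \<le> \<gamma> * L * (\<gamma>\<^sup>2 * \<omega>dwn * (c * ?g' + st))"
        using d1 d2 \<gamma> A2_L \<omega> by (intro mult_left_mono order_trans[OF d1]) (auto intro!: mult_left_mono)
      also have "\<dots> = \<gamma> ^ 3 * \<omega>dwn * L * c * ?g' + \<gamma>\<^sup>2 * st * (\<gamma> * L * \<omega>dwn)"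
        by (simp add: algebra_simps power2_eq_square power3_eq_cube)
      also have "\<dots> \<le> 2 * \<gamma> ^ 3 * \<omega>dwn * L * c * ?g' + \<gamma>\<^sup>2 * st * (2 * \<gamma> * L * \<omega>dwn)"
      proof (intro add_mono)
        have "0 \<le> \<gamma> ^ 3 * \<omega>dwn * L * c * ?g'" using \<gamma> \<omega> A2_L c0 g'0 by simp
        then show "\<gamma> ^ 3 * \<omega>dwn * L * c * ?g' \<le> 2 * \<gamma> ^ 3 * \<omega>dwn * L * c * ?g'" by linarith
        have "0 \<le> \<gamma>\<^sup>2 * st * (\<gamma> * L * \<omega>dwn)" using \<gamma> \<omega> A2_L st0 by simp
        then show "\<gamma>\<^sup>2 * st * (\<gamma> * L * \<omega>dwn) \<le> \<gamma>\<^sup>2 * st * (2 * \<gamma> * L * \<omega>dwn)" by (simp add: algebra_simps)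
      qed
      finally show ?thesis unfolding Suc by (simp add: algebra_simps)
    qed
    then show ?thesis by simp
  qed
  finally show ?thesis unfolding u_def W_def g_def Wh_def c_def st_def by simp
qed

end

theorem mainTheorem7:
  fixes M :: "'m measure" and S :: "'b measure"
    and F :: "'a::euclidean_space \<Rightarrow> real" and gradF :: "'a \<Rightarrow> 'a"
    and G :: "nat \<Rightarrow> nat \<Rightarrow> 'a \<Rightarrow> 'b \<Rightarrow> 'a"
    and Cup Cdwn :: "'a \<Rightarrow> 'b \<Rightarrow> 'a"
    and \<xi> :: "noise_idx \<Rightarrow> 'm \<Rightarrow> 'b"
    and N b :: nat and L \<gamma> \<sigma> \<omega>up \<omega>dwn :: real and w0 wstar :: 'a and k :: nat
  assumes P: "prob_space M"
    and indep: "prob_space.indep_vars M (\<lambda>_. S) \<xi> (used_idx N)"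
    and N: "N \<ge> 1" and b: "b \<ge> 1"
    and \<gamma>: "\<gamma> > 0"
    and \<omega>: "\<omega>up > 0" "\<omega>dwn > 0"
    \<comment> \<open>measurability of the oracle and compression maps in (point, randomness)\<close>
    and G_meas: "\<And>k i. (\<lambda>p. G k i (fst p) (snd p)) \<in> borel_measurable (borel \<Otimes>\<^sub>M S)"
    and Cup_meas: "(\<lambda>p. Cup (fst p) (snd p)) \<in> borel_measurable (borel \<Otimes>\<^sub>M S)"
    and Cdwn_meas: "(\<lambda>p. Cdwn (fst p) (snd p)) \<in> borel_measurable (borel \<Otimes>\<^sub>M S)"
    \<comment> \<open>(A1) uplink compression\<close>
    and A1_up_int: "\<And>v k i. k \<ge> 1 \<Longrightarrow> i < N \<Longrightarrow>
                      integrable M (\<lambda>\<omega>. Cup v (\<xi> (Up k i) \<omega>))"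
    and A1_up_unb: "\<And>v k i. k \<ge> 1 \<Longrightarrow> i < N \<Longrightarrow>
                      (\<integral>\<omega>. Cup v (\<xi> (Up k i) \<omega>) \<partial>M) = v"
    and A1_up_var_int: "\<And>v k i. k \<ge> 1 \<Longrightarrow> i < N \<Longrightarrow>
                      integrable M (\<lambda>\<omega>. (norm (Cup v (\<xi> (Up k i) \<omega>) - v))\<^sup>2)"
    and A1_up_var: "\<And>v k i. k \<ge> 1 \<Longrightarrow> i < N \<Longrightarrow>
                      (\<integral>\<omega>. (norm (Cup v (\<xi> (Up k i) \<omega>) - v))\<^sup>2 \<partial>M) \<le> \<omega>up * (norm v)\<^sup>2"
    \<comment> \<open>(A1) downlink compression\<close>
    and A1_dw_int: "\<And>v k. k \<ge> 1 \<Longrightarrow> integrable M (\<lambda>\<omega>. Cdwn v (\<xi> (Dw k) \<omega>))"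
    and A1_dw_unb: "\<And>v k. k \<ge> 1 \<Longrightarrow> (\<integral>\<omega>. Cdwn v (\<xi> (Dw k) \<omega>) \<partial>M) = v"
    and A1_dw_var_int: "\<And>v k. k \<ge> 1 \<Longrightarrow>
                      integrable M (\<lambda>\<omega>. (norm (Cdwn v (\<xi> (Dw k) \<omega>) - v))\<^sup>2)"
    and A1_dw_var: "\<And>v k. k \<ge> 1 \<Longrightarrow>
                      (\<integral>\<omega>. (norm (Cdwn v (\<xi> (Dw k) \<omega>) - v))\<^sup>2 \<partial>M) \<le> \<omega>dwn * (norm v)\<^sup>2"
    \<comment> \<open>(A2) F twice continuously differentiable with gradient gradF, L-smooth\<close>
    and A2_grad: "\<And>w. (F has_derivative (\<lambda>h. gradF w \<bullet> h)) (at w)"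
    and A2_C2: "\<exists>H :: 'a \<Rightarrow> ('a \<Rightarrow>\<^sub>L 'a).
                  (\<forall>w. (gradF has_derivative blinfun_apply (H w)) (at w)) \<and> continuous_on UNIV H"
    and A2_L: "L > 0"
    and A2_smooth: "\<And>x y. norm (gradF x - gradF y) \<le> L * norm (x - y)"
    \<comment> \<open>(A3) with \<mu> = 0: convexity\<close>
    and A3: "convex_on UNIV F"
    \<comment> \<open>w_* is a minimizer\<close>
    and wstar: "\<And>w. F wstar \<le> F w"
    \<comment> \<open>(A4) unbiased oracles with bounded variance\<close>
    and A4_int: "\<And>w k i. k \<ge> 1 \<Longrightarrow> i < N \<Longrightarrow> integrable M (\<lambda>\<omega>. G k i w (\<xi> (Orc k i) \<omega>))"
    and A4_unb: "\<And>w k i. k \<ge> 1 \<Longrightarrow> i < N \<Longrightarrow> (\<integral>\<omega>. G k i w (\<xi> (Orc k i) \<omega>) \<partial>M) = gradF w"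
    and A4_var_int: "\<And>w k i. k \<ge> 1 \<Longrightarrow> i < N \<Longrightarrow>
                      integrable M (\<lambda>\<omega>. (norm (G k i w (\<xi> (Orc k i) \<omega>) - gradF w))\<^sup>2)"
    and A4_var: "\<And>w k i. k \<ge> 1 \<Longrightarrow> i < N \<Longrightarrow>
                      (\<integral>\<omega>. (norm (G k i w (\<xi> (Orc k i) \<omega>) - gradF w))\<^sup>2 \<partial>M) \<le> \<sigma>\<^sup>2 / real b"
    \<comment> \<open>step size condition\<close>
    and step: "\<gamma> * L * (1 + \<omega>up / real N) \<le> 1 / 2"
    and k: "k \<ge> 1"
  shows
    "(let w = (\<lambda>j \<omega>. fst (ghost N \<gamma> G Cup Cdwn \<xi> w0 j \<omega>));
          wh = (\<lambda>j \<omega>. snd (ghost N \<gamma> G Cup Cdwn \<xi> w0 j \<omega>))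
      in (\<integral>\<omega>. (norm (w k \<omega> - wstar))\<^sup>2 \<partial>M)
         \<le> (\<integral>\<omega>. (norm (w (k - 1) \<omega> - wstar))\<^sup>2 \<partial>M)
           - \<gamma> * (\<integral>\<omega>. (F (w (k - 1) \<omega>) - F wstar) \<partial>M)
           - \<gamma> / (2 * L) * (\<integral>\<omega>. (norm (gradF (wh (k - 1) \<omega>)))\<^sup>2 \<partial>M)
           + 2 * \<gamma> ^ 3 * \<omega>dwn * L * (1 + \<omega>up / real N)
               * (if k = 1 then 0 else (\<integral>\<omega>. (norm (gradF (wh (k - 2) \<omega>)))\<^sup>2 \<partial>M))
           + \<gamma>\<^sup>2 * ((1 + \<omega>up) * \<sigma>\<^sup>2 / (real N * real b)) * (1 + 2 * \<gamma> * L * \<omega>dwn))"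
  proof -
  interpret gs M S \<xi> N F gradF G Cup Cdwn b L \<gamma> \<sigma> \<omega>up \<omega>dwn w0 wstar
    by (rule gs.intro[OF isetting.intro[OF P isetting_axioms.intro[OF indep]] gs_axioms.intro])
      (fact N \<gamma> \<omega> G_meas Cup_meas Cdwn_meas A1_up_int A1_up_unb A1_up_var_int A1_up_var
      A1_dw_int A1_dw_unb A1_dw_var_int A1_dw_var A2_grad A2_L A2_smooth A3 wstar A4_int A4_unb
      A4_var_int A4_var step)+
  obtain n where kn: "k = Suc n" using k by (cases k) auto
  have e1: "k - 1 = n" and e2: "k - 2 = n - 1" and e3: "(k = 1) = (n = 0)" using kn by auto
  show ?thesis
    unfolding Let_def e1 e2 e3 ghost_xs
    using main_ineq[of n] unfolding kn .
qed

end
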